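(* Let $\alpha\in(0,1)$ and $k\in\mathbb{Z}\setminus\{0\}$. For $a\in\mathbb{R}$ let $R^{(a)}_{G_{\alpha,k}}$ be the integral operator on functions on $\mathbb{R}^+$ with kernel $\mathscr{G}^{(a)}_{\alpha,k}(x,\rho)=x^ak^2G_{\alpha,k}(x,\rho)$. Then: (i) for each $a\in(-\frac{1-\alpha}{2},2\alpha]$, $R^{(a)}_{G_{\alpha,k}}$ can be realised as an everywhere defined bounded operator on $L^2(\mathbb{R}^+,\mathrm{d}x)$, which is moreover self-adjoint if $a=0$; (ii) for $a=2\alpha$, the operator $R^{(2\alpha)}_{G_{\alpha,k}}$ is bounded uniformly in $k$, i.e. $\sup_{k\in\mathbb{Z}\setminus\{0\}}\|R^{(2\alpha)}_{G_{\alpha,k}}\|<+\infty$.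
   Context: $\Phi_{\alpha,k}(x)=\sqrt{\frac{\pi(1+\alpha)}{2|k|}}x^{-\alpha/2}e^{-\frac{|k|}{1+\alpha}x^{1+\alpha}}$, $F_{\alpha,k}(x)=\sqrt{\frac{2(1+\alpha)}{\pi|k|}}x^{-\alpha/2}\sinh\big(\frac{|k|}{1+\alpha}x^{1+\alpha}\big)$ for $x>0$, and $G_{\alpha,k}(r,\rho)=\frac{1}{1+\alpha}\Phi_{\alpha,k}(r)F_{\alpha,k}(\rho)$ if $0<\rho<r$, $G_{\alpha,k}(r,\rho)=\frac{1}{1+\alpha}F_{\alpha,k}(r)\Phi_{\alpha,k}(\rho)$ if $0<r<\rho$. *)

theory Defs
  imports "HOL-Analysis.Analysis"
begin

definition Phi :: "real \<Rightarrow> int \<Rightarrow> real \<Rightarrow> real" where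
  "Phi \<alpha> k x = sqrt (pi * (1 + \<alpha>) / (2 * \<bar>real_of_int k\<bar>)) * x powr (-\<alpha>/2)
      * exp (- (\<bar>real_of_int k\<bar> / (1 + \<alpha>)) * x powr (1 + \<alpha>))"

definition F :: "real \<Rightarrow> int \<Rightarrow> real \<Rightarrow> real" where
  "F \<alpha> k x = sqrt (2 * (1 + \<alpha>) / (pi * \<bar>real_of_int k\<bar>)) * x powr (-\<alpha>/2)
      * sinh ((\<bar>real_of_int k\<bar> / (1 + \<alpha>)) * x powr (1 + \<alpha>))"

text \<open>Green function; on the (null) diagonal r = rho we set it to 0.\<close>
definition G :: "real \<Rightarrow> int \<Rightarrow> real \<Rightarrow> real \<Rightarrow> real" where
  "G \<alpha> k r \<rho> =
     (if 0 < \<rho> \<and> \<rho> < r then Phi \<alpha> k r * F \<alpha> k \<rho> / (1 + \<alpha>)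
      else if 0 < r \<and> r < \<rho> then F \<alpha> k r * Phi \<alpha> k \<rho> / (1 + \<alpha>)
      else 0)"

definition Gker :: "real \<Rightarrow> real \<Rightarrow> int \<Rightarrow> real \<Rightarrow> real \<Rightarrow> real" where
  "Gker a \<alpha> k x \<rho> = x powr a * (real_of_int k)\<^sup>2 * G \<alpha> k x \<rho>"

definition L2pos :: "(real \<Rightarrow> complex) set" where
  "L2pos = {f. f \<in> borel_measurable lborel \<and>
               set_integrable lborel {0<..} (\<lambda>x. (cmod (f x))\<^sup>2)}"

definition L2norm :: "(real \<Rightarrow> complex) \<Rightarrow> real" where
  "L2norm f = sqrt (LINT x:{0<..}|lborel. (cmod (f x))\<^sup>2)"

definition int_op :: "(real \<Rightarrow> real \<Rightarrow> real) \<Rightarrow> (real \<Rightarrow> complex) \<Rightarrow> real \<Rightarrow> complex" where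
  "int_op K f x = (LINT \<rho>:{0<..}|lborel. complex_of_real (K x \<rho>) * f \<rho>)"

text \<open>The integral operator with kernel K is everywhere defined on L2(R+) (the defining
  integral converges for a.e. x > 0), maps into L2(R+) and has operator norm at most C.\<close>
definition L2_bounded_by :: "real \<Rightarrow> (real \<Rightarrow> real \<Rightarrow> real) \<Rightarrow> bool" where
  "L2_bounded_by C K \<longleftrightarrow>
     (\<forall>f\<in>L2pos.
        (AE x in lborel. 0 < x \<longrightarrow>
            set_integrable lborel {0<..} (\<lambda>\<rho>. complex_of_real (K x \<rho>) * f \<rho>))
      \<and> int_op K f \<in> L2pos
      \<and> L2norm (int_op K f) \<le> C * L2norm f)"

definition L2_bounded :: "(real \<Rightarrow> real \<Rightarrow> real) \<Rightarrow> bool" where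
  "L2_bounded K \<longleftrightarrow> (\<exists>C. L2_bounded_by C K)"

text \<open>Self-adjointness (for an everywhere defined bounded operator): symmetry of the
  L2(R+) inner product.\<close>
definition L2_selfadjoint :: "(real \<Rightarrow> real \<Rightarrow> real) \<Rightarrow> bool" where
  "L2_selfadjoint K \<longleftrightarrow> L2_bounded K \<and>
     (\<forall>f\<in>L2pos. \<forall>g\<in>L2pos.
        (LINT x:{0<..}|lborel. int_op K f x * cnj (g x))
      = (LINT x:{0<..}|lborel. f x * cnj (int_op K g x)))"

end

theory Submission
  imports Defs "HOL-Real_Asymp.Real_Asymp"
begin


definition Kx :: "real \<Rightarrow> real \<Rightarrow> real \<Rightarrow> real \<Rightarrow> real \<Rightarrow> real \<Rightarrow> real" where
  "Kx a \<alpha> c \<kappa> x \<rho> =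
    (if 0 < \<rho> \<and> \<rho> < x then x powr a * c * (x powr (-\<alpha>/2) * \<rho> powr (-\<alpha>/2)) *
        (exp (-\<kappa> * x powr (1+\<alpha>)) * sinh (\<kappa> * \<rho> powr (1+\<alpha>)))
     else if 0 < x \<and> x < \<rho> then x powr a * c * (x powr (-\<alpha>/2) * \<rho> powr (-\<alpha>/2)) *
        (sinh (\<kappa> * x powr (1+\<alpha>)) * exp (-\<kappa> * \<rho> powr (1+\<alpha>)))
     else 0)"

lemma Gker_Kx:
  assumes a: "0 < \<alpha>" and k: "k \<noteq> 0"
  shows "Gker a \<alpha> k = Kx a \<alpha> \<bar>real_of_int k\<bar> (\<bar>real_of_int k\<bar> / (1+\<alpha>))"
proof (intro ext)
  fix x \<rho>
  define c where "c = \<bar>real_of_int k\<bar>"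
  have c: "0 < c" using k by (simp add: c_def)
  have sq: "sqrt (pi * (1 + \<alpha>) / (2 * c)) * sqrt (2 * (1 + \<alpha>) / (pi * c)) = (1+\<alpha>)/c"
  proof -
    have "sqrt (pi * (1 + \<alpha>) / (2 * c)) * sqrt (2 * (1 + \<alpha>) / (pi * c))
        = sqrt ((pi * (1 + \<alpha>) / (2 * c)) * (2 * (1 + \<alpha>) / (pi * c)))"
      by (rule real_sqrt_mult[symmetric])
    also have "(pi * (1 + \<alpha>) / (2 * c)) * (2 * (1 + \<alpha>) / (pi * c)) = ((1+\<alpha>)/c)^2"
      using c by (simp add: field_simps power2_eq_square)
    also have "sqrt (((1+\<alpha>)/c)^2) = (1+\<alpha>)/c" using c a by simp
    finally show ?thesis .
  qed
  have k2: "(real_of_int k)\<^sup>2 = c^2" unfolding c_def by simp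
  have e: "x powr a * c^2 * (P * Q / (1+\<alpha>)) = x powr a * c * (X * Y) * (E * S)"
    if "P = sqrt (pi * (1 + \<alpha>) / (2 * c)) * X * E" "Q = sqrt (2 * (1 + \<alpha>) / (pi * c)) * Y * S"
    for P Q X Y E S
  proof -
    have "P * Q = (sqrt (pi * (1 + \<alpha>) / (2 * c)) * sqrt (2 * (1 + \<alpha>) / (pi * c))) * (X * Y * E * S)"
      using that by (simp add: mult_ac)
    also have "\<dots> = (1+\<alpha>)/c * (X * Y * E * S)" by (simp only: sq)
    finally have PQ: "P * Q = (1+\<alpha>)/c * (X * Y * E * S)" .
    have "x powr a * c^2 * (P * Q / (1+\<alpha>)) = x powr a * c^2 * ((1+\<alpha>)/c * (X * Y * E * S) / (1+\<alpha>))"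
      by (simp only: PQ)
    also have "\<dots> = x powr a * c^2 * ((X * Y * E * S) / c)"
    proof -
      have "1 + \<alpha> \<noteq> 0" using a by simp
      then show ?thesis by simp
    qed
    also have "\<dots> = x powr a * c * (X * Y) * (E * S)" using c by (simp add: field_simps power2_eq_square)
    finally show ?thesis .
  qed
  have e2: "x powr a * c^2 * (Q * P / (1+\<alpha>)) = x powr a * c * (X * Y) * (S * E)"
    if "P = sqrt (pi * (1 + \<alpha>) / (2 * c)) * Y * E" "Q = sqrt (2 * (1 + \<alpha>) / (pi * c)) * X * S"
    for P Q X Y E S
    using e[OF that] by (simp add: mult_ac)
  define \<kappa> where "\<kappa> = c / (1+\<alpha>)"
  have Ph: "Phi \<alpha> k t = sqrt (pi * (1 + \<alpha>) / (2 * c)) * t powr (-\<alpha>/2) * exp (-\<kappa> * t powr (1+\<alpha>))" for t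
    unfolding Phi_def c_def \<kappa>_def ..
  have Fh: "F \<alpha> k t = sqrt (2 * (1 + \<alpha>) / (pi * c)) * t powr (-\<alpha>/2) * sinh (\<kappa> * t powr (1+\<alpha>))" for t
    unfolding F_def c_def \<kappa>_def ..
  have main: "Gker a \<alpha> k x \<rho> = Kx a \<alpha> c \<kappa> x \<rho>"
  proof (cases "0 < \<rho> \<and> \<rho> < x")
    case True
    then have "Gker a \<alpha> k x \<rho> = x powr a * c^2 * (Phi \<alpha> k x * F \<alpha> k \<rho> / (1+\<alpha>))"
      unfolding Gker_def G_def k2 by simp
    also have "\<dots> = x powr a * c * (x powr (-\<alpha>/2) * \<rho> powr (-\<alpha>/2)) *
        (exp (-\<kappa> * x powr (1+\<alpha>)) * sinh (\<kappa> * \<rho> powr (1+\<alpha>)))"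
      by (rule e[OF Ph Fh])
    also have "\<dots> = Kx a \<alpha> c \<kappa> x \<rho>" using True unfolding Kx_def by simp
    finally show ?thesis .
  next
    case False
    show ?thesis
    proof (cases "0 < x \<and> x < \<rho>")
      case True
      then have "Gker a \<alpha> k x \<rho> = x powr a * c^2 * (F \<alpha> k x * Phi \<alpha> k \<rho> / (1+\<alpha>))"
        using False unfolding Gker_def G_def k2 by simp
      also have "\<dots> = x powr a * c * (x powr (-\<alpha>/2) * \<rho> powr (-\<alpha>/2)) *
          (sinh (\<kappa> * x powr (1+\<alpha>)) * exp (-\<kappa> * \<rho> powr (1+\<alpha>)))"
        by (rule e2[OF Ph Fh])
      also have "\<dots> = Kx a \<alpha> c \<kappa> x \<rho>" using True False unfolding Kx_def by simp
      finally show ?thesis .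
    next
      case False2: False
      then show ?thesis using False unfolding Gker_def G_def Kx_def by auto
    qed
  qed
  then show "Gker a \<alpha> k x \<rho> = Kx a \<alpha> \<bar>real_of_int k\<bar> (\<bar>real_of_int k\<bar> / (1+\<alpha>)) x \<rho>"
    unfolding c_def \<kappa>_def .
qed

lemma Kx_nonneg:
  assumes "0 \<le> c" "0 \<le> \<kappa>"
  shows "0 \<le> Kx a \<alpha> c \<kappa> x \<rho>"
  using assms unfolding Kx_def by (auto intro!: mult_nonneg_nonneg)

lemma borel_measurable_sinh[measurable]: "(sinh :: real \<Rightarrow> real) \<in> borel_measurable borel"
  by (intro borel_measurable_continuous_onI continuous_intros)

lemma Kx_meas[measurable]:
  "(\<lambda>(x,y). Kx a \<alpha> c \<kappa> x y) \<in> borel_measurable (lborel \<Otimes>\<^sub>M lborel)"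
  unfolding Kx_def by measurable

lemma Kx_sym: "Kx 0 \<alpha> c \<kappa> x \<rho> = Kx 0 \<alpha> c \<kappa> \<rho> x"
  unfolding Kx_def by (auto simp: mult_ac)


lemma e1:
  fixes u v :: real
  shows "exp (-u) * sinh v \<le> exp (-(u - v)) / 2"
proof -
  have S: "exp (-u) * sinh v = (exp (-u) * exp v - exp (-u) * exp (-v)) / 2"
    by (simp add: sinh_field_def field_simps)
  have E: "exp (-u) * exp v = exp (-(u - v))" by (simp add: exp_add[symmetric])
  have P: "0 < exp (-u) * exp (-v)" by simp
  show ?thesis unfolding S E using P by (intro divide_right_mono) auto
qed

lemma exp_half_mono: "D \<le> w \<Longrightarrow> exp (-w) / 2 \<le> exp (-D) / (2::real)"
  by (intro divide_right_mono) auto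

lemma sinh_le: "0 \<le> v \<Longrightarrow> sinh v \<le> v * exp (v::real)"
proof -
  assume v: "0 \<le> v"
  have "1 - 2 * v \<le> exp (-2 * v)" using exp_ge_add_one_self[of "-2 * v"] by simp
  then have "(1 - 2 * v) * exp v \<le> exp (-2 * v) * exp v" by (intro mult_right_mono) auto
  also have "exp (-2 * v) * exp v = exp (-v)" by (simp add: exp_add[symmetric])
  finally have "(1 - 2 * v) * exp v \<le> exp (-v)" .
  then show ?thesis by (simp add: sinh_field_def field_simps)
qed

lemma e2:
  fixes u v :: real
  assumes "0 \<le> v"
  shows "exp (-u) * sinh v \<le> v * exp (-(u - v))"
proof -
  have "exp (-u) * sinh v \<le> exp (-u) * (v * exp v)" using sinh_le[OF assms] by (intro mult_left_mono) auto
  also have "\<dots> = v * (exp (-u) * exp v)" by simp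
  also have "exp (-u) * exp v = exp (-(u - v))" by (simp add: exp_add[symmetric])
  finally show ?thesis .
qed

lemma I3:
  fixes x \<rho> \<alpha> :: real
  assumes "0 < \<rho>" "\<rho> \<le> x" "0 \<le> \<alpha>"
  shows "x powr \<alpha> * (x - \<rho>) \<le> x powr (1+\<alpha>) - \<rho> powr (1+\<alpha>)"
proof -
  have "x powr (1+\<alpha>) = x * x powr \<alpha>" "\<rho> powr (1+\<alpha>) = \<rho> * \<rho> powr \<alpha>"
    using assms by (simp_all add: powr_add)
  moreover have "\<rho> * \<rho> powr \<alpha> \<le> \<rho> * x powr \<alpha>"
    using assms by (intro mult_left_mono powr_mono2) auto
  ultimately show ?thesis by (simp add: algebra_simps)
qed

lemma powr_pos_le_self: "0 < \<rho> \<Longrightarrow> \<rho> \<le> x \<Longrightarrow> 0 \<le> a \<Longrightarrow> \<rho> powr a \<le> x powr (a::real)"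
  by (intro powr_mono2) auto

lemma powr_neg_anti: "0 < \<rho> \<Longrightarrow> \<rho> \<le> x \<Longrightarrow> a \<le> 0 \<Longrightarrow> x powr a \<le> \<rho> powr (a::real)"
  by (rule powr_mono2')

definition R1 where "R1 \<alpha> c \<kappa> x \<rho> = indicator {0..x} \<rho> * (c * x powr \<alpha> * exp (-(\<kappa> * x powr \<alpha>) * (x - \<rho>)))"
definition R2 where "R2 \<alpha> c \<kappa> x \<rho> = indicator {0..x} \<rho> * (c/2 * x powr (3*\<alpha>/2) * exp (-(\<kappa>/2) * x powr (1+\<alpha>)) * \<rho> powr (-\<alpha>/2))"
definition R3 where "R3 \<alpha> c \<kappa> x \<rho> = indicator {x..} \<rho> * (c/2 * x powr \<alpha> * exp (-(\<kappa> * x powr \<alpha>) * (\<rho> - x)))"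

lemma row_dom2:
  fixes \<alpha> c \<kappa> x \<rho> :: real
  assumes a: "0 < \<alpha>" "\<alpha> < 1" and c: "0 < c" and k: "0 < \<kappa>" and x: "0 < x" and r: "0 < \<rho>"
  shows "Kx (2*\<alpha>) \<alpha> c \<kappa> x \<rho> \<le> R1 \<alpha> c \<kappa> x \<rho> + R2 \<alpha> c \<kappa> x \<rho> + R3 \<alpha> c \<kappa> x \<rho>"
proof -
  have R1nn: "0 \<le> R1 \<alpha> c \<kappa> x \<rho>" unfolding R1_def using c by auto
  have R2nn: "0 \<le> R2 \<alpha> c \<kappa> x \<rho>" unfolding R2_def using c by auto
  have R3nn: "0 \<le> R3 \<alpha> c \<kappa> x \<rho>" unfolding R3_def using c by auto
  have pw1: "x powr (2*\<alpha>) * x powr (-\<alpha>/2) = x powr (3*\<alpha>/2)"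
    by (simp add: powr_add[symmetric])
  have pw2: "x powr (3*\<alpha>/2) * x powr (-\<alpha>/2) = x powr \<alpha>"
    by (simp add: powr_add[symmetric])
  consider "\<rho> < x" | "\<rho> = x" | "x < \<rho>" by linarith
  then show ?thesis
  proof cases
    case 1
    define u where "u = \<kappa> * x powr (1+\<alpha>)"
    define v where "v = \<kappa> * \<rho> powr (1+\<alpha>)"
    define D where "D = \<kappa> * x powr \<alpha> * (x - \<rho>)"
    have v0: "0 \<le> v" unfolding v_def using k by simp
    have Duv: "D \<le> u - v" unfolding D_def u_def v_def
      using mult_left_mono[OF I3[OF r less_imp_le[OF 1], of \<alpha>] less_imp_le[OF k]] a
      by (simp add: algebra_simps)
    have E: "exp (-u) * sinh v \<le> exp (-D) / 2"
      by (rule order_trans[OF e1 exp_half_mono[OF Duv]])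
    have K: "Kx (2*\<alpha>) \<alpha> c \<kappa> x \<rho> = c * x powr (3*\<alpha>/2) * \<rho> powr (-\<alpha>/2) * (exp (-u) * sinh v)"
    proof -
      have "Kx (2*\<alpha>) \<alpha> c \<kappa> x \<rho> = x powr (2*\<alpha>) * c * (x powr (-\<alpha>/2) * \<rho> powr (-\<alpha>/2)) * (exp (-u) * sinh v)"
        unfolding Kx_def u_def v_def using 1 r by (simp add: mult_ac)
      also have "\<dots> = c * (x powr (2*\<alpha>) * x powr (-\<alpha>/2)) * \<rho> powr (-\<alpha>/2) * (exp (-u) * sinh v)"
        by (simp only: mult.assoc mult.left_commute mult.commute)
      finally show ?thesis by (simp only: pw1)
    qed
    show ?thesis
    proof (cases "x/2 < \<rho>")
      case True
      have "\<rho> powr (-\<alpha>/2) \<le> (x/2) powr (-\<alpha>/2)"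
        using True x a by (intro powr_mono2') auto
      also have "\<dots> = x powr (-\<alpha>/2) * 2 powr (\<alpha>/2)"
        by (simp add: powr_divide powr_minus divide_simps)
      also have "2 powr (\<alpha>/2) \<le> 2 powr 1" using a by (intro powr_mono) auto
      then have "x powr (-\<alpha>/2) * 2 powr (\<alpha>/2) \<le> x powr (-\<alpha>/2) * 2" by (intro mult_left_mono) auto
      finally have rp: "\<rho> powr (-\<alpha>/2) \<le> 2 * x powr (-\<alpha>/2)" by simp
      have "Kx (2*\<alpha>) \<alpha> c \<kappa> x \<rho> \<le> c * x powr (3*\<alpha>/2) * (2 * x powr (-\<alpha>/2)) * (exp (-D) / 2)"
        unfolding K using c v0 rp E by (intro mult_mono mult_left_mono) auto
      also have "\<dots> = c * x powr \<alpha> * exp (-D)" by (simp add: pw2[symmetric] mult_ac)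
      also have "\<dots> = R1 \<alpha> c \<kappa> x \<rho>" unfolding R1_def D_def using 1 r by (simp add: mult_ac)
      finally show ?thesis using R2nn R3nn by simp
    next
      case False
      have "(\<kappa>/2) * x powr (1+\<alpha>) \<le> D"
      proof -
        have "x powr (1+\<alpha>) = x powr \<alpha> * x" using x by (simp add: powr_add)
        moreover have "\<kappa> * x powr \<alpha> * (x/2) \<le> \<kappa> * x powr \<alpha> * (x - \<rho>)"
          using False k by (intro mult_left_mono) auto
        ultimately show ?thesis unfolding D_def by (simp add: mult_ac)
      qed
      then have "exp (-u) * sinh v \<le> exp (-((\<kappa>/2) * x powr (1+\<alpha>))) / 2"
        by (intro order_trans[OF E exp_half_mono])
      then have E2: "exp (-u) * sinh v \<le> exp (-(\<kappa>/2) * x powr (1+\<alpha>)) / 2"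
        by simp
      have "Kx (2*\<alpha>) \<alpha> c \<kappa> x \<rho> \<le> c * x powr (3*\<alpha>/2) * \<rho> powr (-\<alpha>/2) * (exp (-(\<kappa>/2) * x powr (1+\<alpha>)) / 2)"
        unfolding K using c E2 by (intro mult_left_mono) auto
      also have "\<dots> = R2 \<alpha> c \<kappa> x \<rho>" unfolding R2_def using 1 r by (simp add: mult_ac)
      finally show ?thesis using R1nn R3nn by simp
    qed
  next
    case 2
    then have "Kx (2*\<alpha>) \<alpha> c \<kappa> x \<rho> = 0" unfolding Kx_def by simp
    then show ?thesis using R1nn R2nn R3nn by simp
  next
    case 3
    define u where "u = \<kappa> * \<rho> powr (1+\<alpha>)"
    define v where "v = \<kappa> * x powr (1+\<alpha>)"
    define D where "D = \<kappa> * x powr \<alpha> * (\<rho> - x)"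
    have v0: "0 \<le> v" unfolding v_def using k by simp
    have Duv: "D \<le> u - v"
    proof -
      have "x powr \<alpha> * (\<rho> - x) \<le> \<rho> powr \<alpha> * (\<rho> - x)"
        using 3 x a by (intro mult_right_mono powr_mono2) auto
      also have "\<dots> \<le> \<rho> powr (1+\<alpha>) - x powr (1+\<alpha>)"
        using I3[OF x less_imp_le[OF 3], of \<alpha>] a by simp
      finally have h: "x powr \<alpha> * (\<rho> - x) \<le> \<rho> powr (1+\<alpha>) - x powr (1+\<alpha>)" .
      show ?thesis unfolding D_def u_def v_def
        using mult_left_mono[OF h less_imp_le[OF k]] by (simp add: algebra_simps)
    qed
    have E: "exp (-u) * sinh v \<le> exp (-D) / 2"
      by (rule order_trans[OF e1 exp_half_mono[OF Duv]])
    have K: "Kx (2*\<alpha>) \<alpha> c \<kappa> x \<rho> = c * x powr (3*\<alpha>/2) * \<rho> powr (-\<alpha>/2) * (exp (-u) * sinh v)"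
    proof -
      have "Kx (2*\<alpha>) \<alpha> c \<kappa> x \<rho> = x powr (2*\<alpha>) * c * (x powr (-\<alpha>/2) * \<rho> powr (-\<alpha>/2)) * (exp (-u) * sinh v)"
        unfolding Kx_def u_def v_def using 3 x by (simp add: mult_ac)
      also have "\<dots> = c * (x powr (2*\<alpha>) * x powr (-\<alpha>/2)) * \<rho> powr (-\<alpha>/2) * (exp (-u) * sinh v)"
        by (simp only: mult.assoc mult.left_commute mult.commute)
      finally show ?thesis by (simp only: pw1)
    qed
    have rp: "\<rho> powr (-\<alpha>/2) \<le> x powr (-\<alpha>/2)"
      using 3 x a by (intro powr_mono2') auto
    have "Kx (2*\<alpha>) \<alpha> c \<kappa> x \<rho> \<le> c * x powr (3*\<alpha>/2) * x powr (-\<alpha>/2) * (exp (-D) / 2)"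
      unfolding K using c rp E v0 by (intro mult_mono mult_left_mono) auto
    also have "\<dots> = c/2 * x powr \<alpha> * exp (-D)" by (simp add: pw2[symmetric] mult_ac)
    also have "\<dots> = R3 \<alpha> c \<kappa> x \<rho>" unfolding R3_def D_def using 3 by (simp add: mult_ac)
    finally show ?thesis using R1nn R2nn by simp
  qed
qed

definition C1 where "C1 \<alpha> c \<kappa> \<rho> x = indicator {0..\<rho>} x * (c/2 * \<rho> powr \<alpha> * exp (-(\<kappa> * \<rho> powr \<alpha>) * (\<rho> - x)))"
definition C2 where "C2 \<alpha> c \<kappa> \<rho> x = indicator {\<rho>..} x * (2*c * \<rho> powr \<alpha> * exp (-(\<kappa> * \<rho> powr \<alpha>) * (x - \<rho>)))"
definition C3 where "C3 \<alpha> c \<kappa> \<rho> x = indicator {0..} x * ((c*\<kappa>) * (x powr (1 + 2*\<alpha>) * exp (-(\<kappa>/2) * x powr (1+\<alpha>))))"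

lemma col_dom2:
  fixes \<alpha> c \<kappa> x \<rho> :: real
  assumes a: "0 < \<alpha>" "\<alpha> < 1" and c: "0 < c" and k: "0 < \<kappa>" and x: "0 < x" and r: "0 < \<rho>"
  shows "Kx (2*\<alpha>) \<alpha> c \<kappa> x \<rho> \<le> C1 \<alpha> c \<kappa> \<rho> x + C2 \<alpha> c \<kappa> \<rho> x + C3 \<alpha> c \<kappa> \<rho> x"
proof -
  have C1nn: "0 \<le> C1 \<alpha> c \<kappa> \<rho> x" unfolding C1_def using c by auto
  have C2nn: "0 \<le> C2 \<alpha> c \<kappa> \<rho> x" unfolding C2_def using c by auto
  have C3nn: "0 \<le> C3 \<alpha> c \<kappa> \<rho> x" unfolding C3_def using c k by auto
  have pw1: "x powr (2*\<alpha>) * x powr (-\<alpha>/2) = x powr (3*\<alpha>/2)"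
    by (simp add: powr_add[symmetric])
  have pw2: "\<rho> powr (3*\<alpha>/2) * \<rho> powr (-\<alpha>/2) = \<rho> powr \<alpha>"
    by (simp add: powr_add[symmetric])
  consider "x < \<rho>" | "\<rho> = x" | "\<rho> < x" "x < 2*\<rho>" | "\<rho> < x" "2*\<rho> \<le> x" by linarith
  then show ?thesis
  proof cases
    case 1
    define u where "u = \<kappa> * \<rho> powr (1+\<alpha>)"
    define v where "v = \<kappa> * x powr (1+\<alpha>)"
    define D where "D = \<kappa> * \<rho> powr \<alpha> * (\<rho> - x)"
    have v0: "0 \<le> v" unfolding v_def using k by simp
    have Duv: "D \<le> u - v" unfolding D_def u_def v_def
      using mult_left_mono[OF I3[OF x less_imp_le[OF 1], of \<alpha>] less_imp_le[OF k]] a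
      by (simp add: algebra_simps)
    have E: "exp (-u) * sinh v \<le> exp (-D) / 2"
      by (rule order_trans[OF e1 exp_half_mono[OF Duv]])
    have K: "Kx (2*\<alpha>) \<alpha> c \<kappa> x \<rho> = c * x powr (3*\<alpha>/2) * \<rho> powr (-\<alpha>/2) * (exp (-u) * sinh v)"
    proof -
      have "Kx (2*\<alpha>) \<alpha> c \<kappa> x \<rho> = x powr (2*\<alpha>) * c * (x powr (-\<alpha>/2) * \<rho> powr (-\<alpha>/2)) * (exp (-u) * sinh v)"
        unfolding Kx_def u_def v_def using 1 x by (simp add: mult_ac)
      also have "\<dots> = c * (x powr (2*\<alpha>) * x powr (-\<alpha>/2)) * \<rho> powr (-\<alpha>/2) * (exp (-u) * sinh v)"
        by (simp only: mult.assoc mult.left_commute mult.commute)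
      finally show ?thesis by (simp only: pw1)
    qed
    have xp: "x powr (3*\<alpha>/2) \<le> \<rho> powr (3*\<alpha>/2)" using 1 x a by (intro powr_mono2) auto
    have "Kx (2*\<alpha>) \<alpha> c \<kappa> x \<rho> \<le> c * \<rho> powr (3*\<alpha>/2) * \<rho> powr (-\<alpha>/2) * (exp (-D) / 2)"
      unfolding K using c xp E v0 by (intro mult_mono mult_left_mono) auto
    also have "\<dots> = c/2 * \<rho> powr \<alpha> * exp (-D)" by (simp add: pw2[symmetric] mult_ac)
    also have "\<dots> = C1 \<alpha> c \<kappa> \<rho> x" unfolding C1_def D_def using 1 x by (simp add: mult_ac)
    finally show ?thesis using C2nn C3nn by simp
  next
    case 2
    then have "Kx (2*\<alpha>) \<alpha> c \<kappa> x \<rho> = 0" unfolding Kx_def by simp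
    then show ?thesis using C1nn C2nn C3nn by simp
  next
    case 3
    define u where "u = \<kappa> * x powr (1+\<alpha>)"
    define v where "v = \<kappa> * \<rho> powr (1+\<alpha>)"
    define D where "D = \<kappa> * \<rho> powr \<alpha> * (x - \<rho>)"
    have v0: "0 \<le> v" unfolding v_def using k by simp
    have Duv: "D \<le> u - v"
    proof -
      have "\<rho> powr \<alpha> * (x - \<rho>) \<le> x powr \<alpha> * (x - \<rho>)"
        using 3 r a by (intro mult_right_mono powr_mono2) auto
      also have "\<dots> \<le> x powr (1+\<alpha>) - \<rho> powr (1+\<alpha>)"
        using I3[OF r less_imp_le[OF 3(1)], of \<alpha>] a by simp
      finally have h: "\<rho> powr \<alpha> * (x - \<rho>) \<le> x powr (1+\<alpha>) - \<rho> powr (1+\<alpha>)" .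
      show ?thesis unfolding D_def u_def v_def
        using mult_left_mono[OF h less_imp_le[OF k]] by (simp add: algebra_simps)
    qed
    have E: "exp (-u) * sinh v \<le> exp (-D) / 2"
      by (rule order_trans[OF e1 exp_half_mono[OF Duv]])
    have K: "Kx (2*\<alpha>) \<alpha> c \<kappa> x \<rho> = c * x powr (3*\<alpha>/2) * \<rho> powr (-\<alpha>/2) * (exp (-u) * sinh v)"
    proof -
      have "Kx (2*\<alpha>) \<alpha> c \<kappa> x \<rho> = x powr (2*\<alpha>) * c * (x powr (-\<alpha>/2) * \<rho> powr (-\<alpha>/2)) * (exp (-u) * sinh v)"
        unfolding Kx_def u_def v_def using 3 r by (simp add: mult_ac)
      also have "\<dots> = c * (x powr (2*\<alpha>) * x powr (-\<alpha>/2)) * \<rho> powr (-\<alpha>/2) * (exp (-u) * sinh v)"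
        by (simp only: mult.assoc mult.left_commute mult.commute)
      finally show ?thesis by (simp only: pw1)
    qed
    have xp: "x powr (3*\<alpha>/2) \<le> 4 * \<rho> powr (3*\<alpha>/2)"
    proof -
      have "x powr (3*\<alpha>/2) \<le> (2*\<rho>) powr (3*\<alpha>/2)" using 3 x a by (intro powr_mono2) auto
      also have "\<dots> = 2 powr (3*\<alpha>/2) * \<rho> powr (3*\<alpha>/2)" by (simp add: powr_mult)
      also have "2 powr (3*\<alpha>/2) \<le> 2 powr (2::real)" using a by (intro powr_mono) auto
      then have "2 powr (3*\<alpha>/2) * \<rho> powr (3*\<alpha>/2) \<le> 4 * \<rho> powr (3*\<alpha>/2)"
        by (intro mult_right_mono) auto
      finally show ?thesis .
    qed
    have "Kx (2*\<alpha>) \<alpha> c \<kappa> x \<rho> \<le> c * (4 * \<rho> powr (3*\<alpha>/2)) * \<rho> powr (-\<alpha>/2) * (exp (-D) / 2)"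
      unfolding K using c xp E v0 by (intro mult_mono mult_left_mono) auto
    also have "\<dots> = 2*c * \<rho> powr \<alpha> * exp (-D)" by (simp add: pw2[symmetric] mult_ac)
    also have "\<dots> = C2 \<alpha> c \<kappa> \<rho> x" unfolding C2_def D_def using 3 by (simp add: mult_ac)
    finally show ?thesis using C1nn C3nn by simp
  next
    case 4
    define u where "u = \<kappa> * x powr (1+\<alpha>)"
    define v where "v = \<kappa> * \<rho> powr (1+\<alpha>)"
    have v0: "0 \<le> v" unfolding v_def using k by simp
    have Duv: "(\<kappa>/2) * x powr (1+\<alpha>) \<le> u - v"
    proof -
      have "x powr (1+\<alpha>) / 2 = x powr \<alpha> * (x/2)" using x by (simp add: powr_add)
      moreover have "x powr \<alpha> * (x/2) \<le> x powr \<alpha> * (x - \<rho>)"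
        using 4 by (intro mult_left_mono) auto
      moreover have "x powr \<alpha> * (x - \<rho>) \<le> x powr (1+\<alpha>) - \<rho> powr (1+\<alpha>)"
        using I3[OF r less_imp_le[OF 4(1)], of \<alpha>] a by simp
      ultimately have h: "x powr (1+\<alpha>) / 2 \<le> x powr (1+\<alpha>) - \<rho> powr (1+\<alpha>)" by linarith
      show ?thesis unfolding u_def v_def
        using mult_left_mono[OF h less_imp_le[OF k]] by (simp add: algebra_simps)
    qed
    have E: "exp (-u) * sinh v \<le> v * exp (-(\<kappa>/2) * x powr (1+\<alpha>))"
    proof -
      have "exp (-u) * sinh v \<le> v * exp (-(u - v))" by (rule e2[OF v0])
      also have "\<dots> \<le> v * exp (-((\<kappa>/2) * x powr (1+\<alpha>)))"
        using Duv v0 by (intro mult_left_mono) auto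
      finally show ?thesis by simp
    qed
    have K: "Kx (2*\<alpha>) \<alpha> c \<kappa> x \<rho> = c * x powr (3*\<alpha>/2) * \<rho> powr (-\<alpha>/2) * (exp (-u) * sinh v)"
    proof -
      have "Kx (2*\<alpha>) \<alpha> c \<kappa> x \<rho> = x powr (2*\<alpha>) * c * (x powr (-\<alpha>/2) * \<rho> powr (-\<alpha>/2)) * (exp (-u) * sinh v)"
        unfolding Kx_def u_def v_def using 4 r by (simp add: mult_ac)
      also have "\<dots> = c * (x powr (2*\<alpha>) * x powr (-\<alpha>/2)) * \<rho> powr (-\<alpha>/2) * (exp (-u) * sinh v)"
        by (simp only: mult.assoc mult.left_commute mult.commute)
      finally show ?thesis by (simp only: pw1)
    qed
    have rv: "\<rho> powr (-\<alpha>/2) * v = \<kappa> * \<rho> powr (1 + \<alpha>/2)"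
      unfolding v_def by (simp add: powr_add[symmetric] mult_ac add.commute)
    have rx: "\<rho> powr (1 + \<alpha>/2) \<le> x powr (1 + \<alpha>/2)" using 4 r a by (intro powr_mono2) auto
    have pw3: "x powr (3*\<alpha>/2) * x powr (1 + \<alpha>/2) = x powr (1 + 2*\<alpha>)"
      by (simp add: powr_add[symmetric] add.commute)
    have "Kx (2*\<alpha>) \<alpha> c \<kappa> x \<rho> \<le> c * x powr (3*\<alpha>/2) * \<rho> powr (-\<alpha>/2) * (v * exp (-(\<kappa>/2) * x powr (1+\<alpha>)))"
      unfolding K using c E by (intro mult_left_mono) auto
    also have "\<dots> = c * x powr (3*\<alpha>/2) * (\<rho> powr (-\<alpha>/2) * v) * exp (-(\<kappa>/2) * x powr (1+\<alpha>))"
      by (simp only: mult.assoc)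
    also have "\<dots> = c * \<kappa> * (x powr (3*\<alpha>/2) * \<rho> powr (1 + \<alpha>/2)) * exp (-(\<kappa>/2) * x powr (1+\<alpha>))"
      unfolding rv by (simp only: mult.assoc mult.left_commute mult.commute)
    also have "\<dots> \<le> c * \<kappa> * (x powr (3*\<alpha>/2) * x powr (1 + \<alpha>/2)) * exp (-(\<kappa>/2) * x powr (1+\<alpha>))"
      using c k rx by (intro mult_right_mono mult_left_mono) auto
    also have "\<dots> = C3 \<alpha> c \<kappa> \<rho> x" unfolding C3_def pw3 using x by (simp add: mult_ac)
    finally show ?thesis using C1nn C2nn by simp
  qed
qed


lemma Kx_scale:
  assumes "0 < x"
  shows "Kx a \<alpha> c \<kappa> x \<rho> = x powr (a - b) * Kx b \<alpha> c \<kappa> x \<rho>"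
proof -
  have "x powr a = x powr (a - b) * x powr b" by (simp add: powr_add[symmetric])
  then show ?thesis unfolding Kx_def by (simp add: mult_ac)
qed

lemma Kx_mono_a:
  assumes "1 \<le> x" "a \<le> b" "0 \<le> c" "0 \<le> \<kappa>"
  shows "Kx a \<alpha> c \<kappa> x \<rho> \<le> Kx b \<alpha> c \<kappa> x \<rho>"
proof -
  have "x powr (a - b) \<le> x powr 0" using assms by (intro powr_mono) auto
  then have "x powr (a - b) \<le> 1" using assms by simp
  then have "x powr (a - b) * Kx b \<alpha> c \<kappa> x \<rho> \<le> 1 * Kx b \<alpha> c \<kappa> x \<rho>"
    using Kx_nonneg[of c \<kappa>] assms by (intro mult_right_mono) auto
  then show ?thesis using Kx_scale[of x a \<alpha> c \<kappa> \<rho> b] assms by simp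
qed

definition HR1 where "HR1 a \<alpha> c \<kappa> x \<rho> = indicator {0..x} \<rho> * (c*\<kappa>*x powr (a - \<alpha>/2) * \<rho> powr (1 + \<alpha>/2))"
definition HR2 where "HR2 a \<alpha> c \<kappa> x \<rho> = indicator {x..} \<rho> * (c*\<kappa>*x powr (a + 1) * exp (-(\<kappa> * x powr \<alpha>) * (\<rho> - x)))"

lemma H_dom:
  fixes \<alpha> c \<kappa> x \<rho> :: real
  assumes a: "0 < \<alpha>" "\<alpha> < 1" and c: "0 < c" and k: "0 < \<kappa>" and x: "0 < x" and r: "0 < \<rho>"
  shows "Kx a \<alpha> c \<kappa> x \<rho> \<le> HR1 a \<alpha> c \<kappa> x \<rho> + HR2 a \<alpha> c \<kappa> x \<rho>"
proof -
  have H1nn: "0 \<le> HR1 a \<alpha> c \<kappa> x \<rho>" unfolding HR1_def using c k by auto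
  have H2nn: "0 \<le> HR2 a \<alpha> c \<kappa> x \<rho>" unfolding HR2_def using c k by auto
  consider "\<rho> < x" | "\<rho> = x" | "x < \<rho>" by linarith
  then show ?thesis
  proof cases
    case 1
    define u where "u = \<kappa> * x powr (1+\<alpha>)"
    define v where "v = \<kappa> * \<rho> powr (1+\<alpha>)"
    have v0: "0 \<le> v" unfolding v_def using k by simp
    have uv: "0 \<le> u - v"
    proof -
      have "0 \<le> x powr \<alpha> * (x - \<rho>)" using 1 by simp
      also have "\<dots> \<le> x powr (1+\<alpha>) - \<rho> powr (1+\<alpha>)" using I3[OF r less_imp_le[OF 1], of \<alpha>] a by simp
      finally show ?thesis unfolding u_def v_def using k by (simp add: algebra_simps)
    qed
    have E: "exp (-u) * sinh v \<le> v"
    proof -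
      have "exp (-u) * sinh v \<le> v * exp (-(u - v))" by (rule e2[OF v0])
      also have "\<dots> \<le> v * 1" using uv v0 by (intro mult_left_mono) auto
      finally show ?thesis by simp
    qed
    have rv: "\<rho> powr (-\<alpha>/2) * v = \<kappa> * \<rho> powr (1 + \<alpha>/2)"
      unfolding v_def by (simp add: powr_add[symmetric] mult_ac add.commute)
    have pw: "x powr a * x powr (-\<alpha>/2) = x powr (a - \<alpha>/2)" by (simp add: powr_add[symmetric])
    have "Kx a \<alpha> c \<kappa> x \<rho> = x powr a * c * (x powr (-\<alpha>/2) * \<rho> powr (-\<alpha>/2)) * (exp (-u) * sinh v)"
      unfolding Kx_def u_def v_def using 1 r by simp
    also have "\<dots> \<le> x powr a * c * (x powr (-\<alpha>/2) * \<rho> powr (-\<alpha>/2)) * v"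
      using c E by (intro mult_left_mono) auto
    also have "\<dots> = c * (x powr a * x powr (-\<alpha>/2)) * (\<rho> powr (-\<alpha>/2) * v)"
      by (simp only: mult.assoc mult.left_commute mult.commute)
    also have "\<dots> = HR1 a \<alpha> c \<kappa> x \<rho>" unfolding HR1_def pw rv using 1 r by (simp add: mult_ac)
    finally show ?thesis using H2nn by simp
  next
    case 2
    then have "Kx a \<alpha> c \<kappa> x \<rho> = 0" unfolding Kx_def by simp
    then show ?thesis using H1nn H2nn by simp
  next
    case 3
    define u where "u = \<kappa> * \<rho> powr (1+\<alpha>)"
    define v where "v = \<kappa> * x powr (1+\<alpha>)"
    define D where "D = \<kappa> * x powr \<alpha> * (\<rho> - x)"
    have v0: "0 \<le> v" unfolding v_def using k by simp
    have Duv: "D \<le> u - v"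
    proof -
      have "x powr \<alpha> * (\<rho> - x) \<le> \<rho> powr \<alpha> * (\<rho> - x)"
        using 3 x a by (intro mult_right_mono powr_mono2) auto
      also have "\<dots> \<le> \<rho> powr (1+\<alpha>) - x powr (1+\<alpha>)"
        using I3[OF x less_imp_le[OF 3], of \<alpha>] a by simp
      finally have h: "x powr \<alpha> * (\<rho> - x) \<le> \<rho> powr (1+\<alpha>) - x powr (1+\<alpha>)" .
      show ?thesis unfolding D_def u_def v_def
        using mult_left_mono[OF h less_imp_le[OF k]] by (simp add: algebra_simps)
    qed
    have E: "exp (-u) * sinh v \<le> v * exp (-D)"
    proof -
      have "exp (-u) * sinh v \<le> v * exp (-(u - v))" by (rule e2[OF v0])
      also have "\<dots> \<le> v * exp (-D)" using Duv v0 by (intro mult_left_mono) auto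
      finally show ?thesis .
    qed
    have rp: "\<rho> powr (-\<alpha>/2) \<le> x powr (-\<alpha>/2)"
      using 3 x a by (intro powr_mono2') auto
    have pw: "x powr a * (x powr (-\<alpha>/2) * x powr (-\<alpha>/2)) * v = \<kappa> * x powr (a + 1)"
      unfolding v_def by (simp add: powr_add[symmetric] mult_ac)
    have "Kx a \<alpha> c \<kappa> x \<rho> = x powr a * c * (x powr (-\<alpha>/2) * \<rho> powr (-\<alpha>/2)) * (exp (-u) * sinh v)"
      unfolding Kx_def u_def v_def using 3 x by (simp add: mult_ac)
    also have "\<dots> \<le> x powr a * c * (x powr (-\<alpha>/2) * x powr (-\<alpha>/2)) * (exp (-u) * sinh v)"
      using c rp v0 by (intro mult_right_mono mult_left_mono) auto
    also have "\<dots> \<le> x powr a * c * (x powr (-\<alpha>/2) * x powr (-\<alpha>/2)) * (v * exp (-D))"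
      using c by (intro mult_left_mono E) auto
    also have "\<dots> = c * (x powr a * (x powr (-\<alpha>/2) * x powr (-\<alpha>/2)) * v) * exp (-D)"
      by (simp only: mult.assoc mult.left_commute mult.commute)
    also have "\<dots> = HR2 a \<alpha> c \<kappa> x \<rho>" unfolding HR2_def pw D_def using 3 by (simp add: mult_ac)
    finally show ?thesis using H1nn by simp
  qed
qed


lemma N1:
  fixes \<beta> x :: real
  assumes b: "0 < \<beta>" and x: "0 \<le> x"
  shows "(\<integral>\<^sup>+\<rho>. ennreal (indicator {0..x} \<rho> * exp (-\<beta> * (x - \<rho>))) \<partial>lborel) \<le> ennreal (1/\<beta>)"
proof -
  have "((\<lambda>\<rho>. exp (-\<beta> * (x - \<rho>))) has_integral (exp (-\<beta> * (x - x)) / \<beta> - exp (-\<beta> * (x - 0)) / \<beta>)) {0..x}"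
    using x b
    by (intro fundamental_theorem_of_calculus)
       (auto intro!: derivative_eq_intros simp flip: has_real_derivative_iff_has_vector_derivative)
  then have "(\<integral>\<^sup>+\<rho>. ennreal (indicator {0..x} \<rho> * exp (-\<beta> * (x - \<rho>))) \<partial>lborel)
       = ennreal (exp (-\<beta> * (x - x)) / \<beta> - exp (-\<beta> * (x - 0)) / \<beta>)"
    by (intro nn_integral_has_integral_lebesgue) auto
  also have "\<dots> \<le> ennreal (1/\<beta>)"
    using b by (intro ennreal_leI) (simp add: divide_simps)
  finally show ?thesis .
qed

lemma N2:
  fixes \<beta> x :: real
  assumes b: "0 < \<beta>"
  shows "(\<integral>\<^sup>+\<rho>. ennreal (indicator {x..} \<rho> * exp (-\<beta> * (\<rho> - x))) \<partial>lborel) = ennreal (1/\<beta>)"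
proof -
  have "((\<lambda>\<rho>. exp (\<beta> * x) * exp (-\<beta> * \<rho>)) has_integral exp (\<beta> * x) * (exp (-\<beta> * x) / \<beta>)) {x..}"
    by (intro has_integral_mult_right has_integral_exp_minus_to_infinity b)
  moreover have "exp (\<beta> * x) * exp (-\<beta> * \<rho>) = exp (-\<beta> * (\<rho> - x))" for \<rho>
    by (simp add: exp_add[symmetric] algebra_simps)
  moreover have "exp (\<beta> * x) * (exp (-\<beta> * x) / \<beta>) = 1/\<beta>"
    by (simp add: exp_minus field_simps)
  ultimately have "((\<lambda>\<rho>. exp (-\<beta> * (\<rho> - x))) has_integral 1/\<beta>) {x..}" by simp
  then show ?thesis
    by (intro nn_integral_has_integral_lebesgue) auto
qed

lemma N3:
  fixes \<gamma> c :: real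
  assumes "-1 < \<gamma>" "0 \<le> c"
  shows "(\<integral>\<^sup>+\<rho>. ennreal (indicator {0..c} \<rho> * \<rho> powr \<gamma>) \<partial>lborel) = ennreal (c powr (\<gamma>+1) / (\<gamma>+1))"
  using has_integral_powr_from_0[OF assms]
  by (intro nn_integral_has_integral_lebesgue) auto

lemma N4:
  fixes \<alpha> \<beta> :: real
  assumes a: "0 < \<alpha>" and b: "0 < \<beta>"
  shows "(\<integral>\<^sup>+x. ennreal (indicator {0..} x * (x powr (1 + 2*\<alpha>) * exp (-\<beta> * x powr (1+\<alpha>)))) \<partial>lborel)
     = ennreal (1 / ((1+\<alpha>) * \<beta>^2))"
proof -
  define p where "p = 1 + \<alpha>"
  have p: "1 < p" using a by (simp add: p_def)
  define F where "F y = -(1 + \<beta> * y powr p) * exp (-\<beta> * y powr p) / (p * \<beta>^2)" for y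
  define h where "h x = x powr (1 + 2*\<alpha>) * exp (-\<beta> * x powr p)" for x
  have hint: "(h has_integral (F y - F 0)) {0..y}" if y: "0 \<le> y" for y
  proof (rule fundamental_theorem_of_calculus_interior[OF y])
    show "continuous_on {0..y} F" unfolding F_def
      using p b by (intro continuous_intros continuous_on_powr') auto
    fix x assume x: "x \<in> {0<..<y}"
    have "(F has_real_derivative h x) (at x)"
    proof -
      have "(F has_real_derivative
          (-(\<beta> * (p * x powr (p - 1))) * exp (-\<beta> * x powr p)
           + -(1 + \<beta> * x powr p) * (exp (-\<beta> * x powr p) * (-\<beta> * (p * x powr (p - 1))))) / (p * \<beta>^2)) (at x)"
        unfolding F_def using x p b by (auto intro!: derivative_eq_intros)
      moreover have "(-(\<beta> * (p * x powr (p - 1))) * exp (-\<beta> * x powr p)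
           + -(1 + \<beta> * x powr p) * (exp (-\<beta> * x powr p) * (-\<beta> * (p * x powr (p - 1))))) / (p * \<beta>^2) = h x"
      proof -
        have "x powr p * x powr (p - 1) = x powr (1 + 2*\<alpha>)"
          using x by (simp add: powr_add[symmetric] p_def add.commute)
        then show ?thesis unfolding h_def using b p
          by (simp add: field_simps power2_eq_square)
      qed
      ultimately show ?thesis by simp
    qed
    then show "(F has_vector_derivative h x) (at x)"
      by (simp add: has_real_derivative_iff_has_vector_derivative)
  qed
  have F0: "F 0 = - 1 / (p * \<beta>^2)" unfolding F_def using p by simp
  have "(h has_integral (0 - F 0)) {0..}"
  proof (rule has_integral_to_inf)
    show "h integrable_on {0..y}" for y
    proof (cases "0 \<le> y")
      case True then show ?thesis using hint by blast
    next
      case False then show ?thesis by (simp add: integrable_on_empty)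
    qed
    have "\<forall>\<^sub>F y in at_top. integral {0..y} h = F y - F 0"
      using hint eventually_at_top_linorder by (auto intro!: exI[of _ 0] integral_unique)
    moreover have "((\<lambda>y. F y - F 0) \<longlongrightarrow> 0 - F 0) at_top"
      unfolding F_def using p b by real_asymp
    ultimately show "((\<lambda>y. integral {0..y} h) \<longlongrightarrow> 0 - F 0) at_top"
      by (simp add: filterlim_cong)
    show "0 \<le> h y" if "0 \<le> y" for y unfolding h_def by simp
  qed
  then have "(\<integral>\<^sup>+x. ennreal (indicator {0..} x * h x) \<partial>lborel) = ennreal (0 - F 0)"
    by (rule nn_integral_has_integral_lebesgue[rotated]) (simp add: h_def)
  then show ?thesis unfolding h_def F0 p_def by simp
qed


lemma schur:
  fixes K :: "real \<Rightarrow> real \<Rightarrow> real" and A B :: real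
  assumes Km[measurable]: "(\<lambda>(x,y). K x y) \<in> borel_measurable (lborel \<Otimes>\<^sub>M lborel)"
  and Knn: "\<And>x y. 0 \<le> K x y"
  and A: "0 \<le> A" and B: "0 \<le> B"
  and row: "\<And>x. 0 < x \<Longrightarrow> (\<integral>\<^sup>+y. ennreal (K x y) * indicator {0<..} y \<partial>lborel) \<le> ennreal A"
  and col: "\<And>y. 0 < y \<Longrightarrow> (\<integral>\<^sup>+x. ennreal (K x y) * indicator {0<..} x \<partial>lborel) \<le> ennreal B"
  and f: "f \<in> L2pos"
  shows "(AE x in lborel. 0 < x \<longrightarrow> set_integrable lborel {0<..} (\<lambda>y. complex_of_real (K x y) * f y))
      \<and> int_op K f \<in> L2pos \<and> L2norm (int_op K f) \<le> sqrt (A*B) * L2norm f"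
proof -
  define P :: "real set" where "P = {0<..}"
  have Pm[measurable]: "P \<in> sets lborel" unfolding P_def by simp
  have fm[measurable]: "f \<in> borel_measurable lborel" using f unfolding L2pos_def by auto
  have Kx[measurable]: "K x \<in> borel_measurable lborel" for x
    by measurable
  have Ky[measurable]: "(\<lambda>x. K x y) \<in> borel_measurable lborel" for y
    by measurable
  have fint: "integrable lborel (\<lambda>y. indicator P y *\<^sub>R (cmod (f y))\<^sup>2)"
    using f unfolding L2pos_def set_integrable_def P_def by auto
  define Nr where "Nr = (LINT y:P|lborel. (cmod (f y))\<^sup>2)"
  have Nr0: "0 \<le> Nr" unfolding Nr_def set_lebesgue_integral_def
    by (intro integral_nonneg_AE) (auto split: split_indicator)
  have L2f: "L2norm f = sqrt Nr" unfolding L2norm_def Nr_def P_def ..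
  have Nf: "(\<integral>\<^sup>+y. ennreal ((cmod (f y))\<^sup>2) * indicator P y \<partial>lborel) = ennreal Nr"
  proof -
    have "(\<integral>\<^sup>+y. ennreal ((cmod (f y))\<^sup>2) * indicator P y \<partial>lborel)
        = (\<integral>\<^sup>+y. ennreal (indicator P y *\<^sub>R (cmod (f y))\<^sup>2) \<partial>lborel)"
      by (intro nn_integral_cong) (auto split: split_indicator)
    also have "\<dots> = ennreal Nr" unfolding Nr_def set_lebesgue_integral_def
      by (intro nn_integral_eq_integral fint) (auto split: split_indicator)
    finally show ?thesis .
  qed
  define I where "I x = (\<integral>\<^sup>+y. ennreal (K x y * (cmod (f y))\<^sup>2) * indicator P y \<partial>lborel)" for x
  have Im[measurable]: "I \<in> borel_measurable lborel"
    unfolding I_def by measurable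
  have tonelli: "(\<integral>\<^sup>+x. I x * indicator P x \<partial>lborel) \<le> ennreal B * ennreal Nr"
  proof -
    have "(\<integral>\<^sup>+x. I x * indicator P x \<partial>lborel)
       = (\<integral>\<^sup>+x. (\<integral>\<^sup>+y. ennreal (K x y * (cmod (f y))\<^sup>2) * indicator P y * indicator P x \<partial>lborel) \<partial>lborel)"
      unfolding I_def by (intro nn_integral_cong nn_integral_multc[symmetric]) auto
    also have "\<dots> = (\<integral>\<^sup>+y. (\<integral>\<^sup>+x. ennreal (K x y * (cmod (f y))\<^sup>2) * indicator P y * indicator P x \<partial>lborel) \<partial>lborel)"
      by (intro lborel_pair.Fubini'[symmetric]) measurable
    also have "\<dots> = (\<integral>\<^sup>+y. (ennreal ((cmod (f y))\<^sup>2) * indicator P y) * (\<integral>\<^sup>+x. ennreal (K x y) * indicator P x \<partial>lborel) \<partial>lborel)"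
    proof (intro nn_integral_cong)
      fix y
      have "(\<integral>\<^sup>+x. ennreal (K x y * (cmod (f y))\<^sup>2) * indicator P y * indicator P x \<partial>lborel)
         = (\<integral>\<^sup>+x. (ennreal ((cmod (f y))\<^sup>2) * indicator P y) * (ennreal (K x y) * indicator P x) \<partial>lborel)"
        by (intro nn_integral_cong) (simp add: ennreal_mult Knn mult_ac)
      also have "\<dots> = (ennreal ((cmod (f y))\<^sup>2) * indicator P y) * (\<integral>\<^sup>+x. ennreal (K x y) * indicator P x \<partial>lborel)"
        by (intro nn_integral_cmult) measurable
      finally show "(\<integral>\<^sup>+x. ennreal (K x y * (cmod (f y))\<^sup>2) * indicator P y * indicator P x \<partial>lborel)
         = (ennreal ((cmod (f y))\<^sup>2) * indicator P y) * (\<integral>\<^sup>+x. ennreal (K x y) * indicator P x \<partial>lborel)" .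
    qed
    also have "\<dots> \<le> (\<integral>\<^sup>+y. (ennreal ((cmod (f y))\<^sup>2) * indicator P y) * ennreal B \<partial>lborel)"
    proof (intro nn_integral_mono)
      fix y
      show "(ennreal ((cmod (f y))\<^sup>2) * indicator P y) * (\<integral>\<^sup>+x. ennreal (K x y) * indicator P x \<partial>lborel)
          \<le> (ennreal ((cmod (f y))\<^sup>2) * indicator P y) * ennreal B"
        using col[of y] by (cases "y \<in> P") (auto simp: P_def intro: mult_left_mono)
    qed
    also have "\<dots> = (\<integral>\<^sup>+y. ennreal ((cmod (f y))\<^sup>2) * indicator P y \<partial>lborel) * ennreal B"
      by (rule nn_integral_multc) measurable
    also have "\<dots> = ennreal B * ennreal Nr"
      unfolding Nf by (rule mult.commute)
    finally show ?thesis .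
  qed
  define J where "J x = (\<integral>\<^sup>+y. ennreal (K x y * cmod (f y)) * indicator P y \<partial>lborel)" for x
  have CS: "(J x)\<^sup>2 \<le> ennreal A * I x" if x: "0 < x" for x
  proof -
    have "(J x)\<^sup>2 = (\<integral>\<^sup>+y. (ennreal (sqrt (K x y)) * indicator P y) * (ennreal (sqrt (K x y) * cmod (f y)) * indicator P y) \<partial>lborel)\<^sup>2"
      unfolding J_def
      by (intro arg_cong[where f="\<lambda>t. t^2"] nn_integral_cong)
         (auto simp: ennreal_mult[symmetric] Knn mult.assoc[symmetric] split: split_indicator)
    also have "\<dots> \<le> (\<integral>\<^sup>+y. (ennreal (sqrt (K x y)) * indicator P y)^2 \<partial>lborel) *
                    (\<integral>\<^sup>+y. (ennreal (sqrt (K x y) * cmod (f y)) * indicator P y)^2 \<partial>lborel)"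
      by (intro Cauchy_Schwarz_nn_integral) measurable
    also have "(\<integral>\<^sup>+y. (ennreal (sqrt (K x y)) * indicator P y)^2 \<partial>lborel) = (\<integral>\<^sup>+y. ennreal (K x y) * indicator P y \<partial>lborel)"
      by (intro nn_integral_cong) (auto simp: ennreal_power Knn split: split_indicator)
    also have "(\<integral>\<^sup>+y. (ennreal (sqrt (K x y) * cmod (f y)) * indicator P y)^2 \<partial>lborel) = I x"
      unfolding I_def
      by (intro nn_integral_cong) (auto simp: ennreal_power Knn power_mult_distrib split: split_indicator)
    also have "(\<integral>\<^sup>+y. ennreal (K x y) * indicator P y \<partial>lborel) * I x \<le> ennreal A * I x"
      using row[OF x] by (intro mult_right_mono) (auto simp: P_def)
    finally show ?thesis .
  qed
  define T where "T = int_op K f"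
  have T_eq: "T x = integral\<^sup>L lborel (\<lambda>y. indicator P y *\<^sub>R (complex_of_real (K x y) * f y))" for x
    unfolding T_def int_op_def set_lebesgue_integral_def P_def ..
  have Tm[measurable]: "T \<in> borel_measurable lborel"
    unfolding T_eq by measurable
  have TJ: "ennreal (cmod (T x)) \<le> J x" for x
  proof (cases "integrable lborel (\<lambda>y. indicator P y *\<^sub>R (complex_of_real (K x y) * f y))")
    case True
    have "ennreal (cmod (T x)) \<le> (\<integral>\<^sup>+y. norm (indicator P y *\<^sub>R (complex_of_real (K x y) * f y)) \<partial>lborel)"
      unfolding T_eq by (rule integral_norm_bound_ennreal[OF True])
    also have "\<dots> = J x" unfolding J_def
      by (intro nn_integral_cong) (auto simp: norm_mult Knn split: split_indicator)
    finally show ?thesis .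
  next
    case False
    then show ?thesis unfolding T_eq by (simp add: not_integrable_integral_eq)
  qed
  have TI: "ennreal ((cmod (T x))\<^sup>2) \<le> ennreal A * I x" if "0 < x" for x
  proof -
    have "ennreal ((cmod (T x))\<^sup>2) = (ennreal (cmod (T x)))\<^sup>2" by (simp add: ennreal_power)
    also have "\<dots> \<le> (J x)\<^sup>2" using TJ[of x] by (intro power_mono) auto
    also have "\<dots> \<le> ennreal A * I x" using CS[OF that] .
    finally show ?thesis .
  qed
  have Tnn: "(\<integral>\<^sup>+x. ennreal ((cmod (T x))\<^sup>2) * indicator P x \<partial>lborel) \<le> ennreal (A * B * Nr)"
  proof -
    have "(\<integral>\<^sup>+x. ennreal ((cmod (T x))\<^sup>2) * indicator P x \<partial>lborel) \<le> (\<integral>\<^sup>+x. ennreal A * (I x * indicator P x) \<partial>lborel)"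
      using TI by (intro nn_integral_mono) (auto simp: P_def split: split_indicator)
    also have "\<dots> = ennreal A * (\<integral>\<^sup>+x. I x * indicator P x \<partial>lborel)"
      by (intro nn_integral_cmult) measurable
    also have "\<dots> \<le> ennreal A * (ennreal B * ennreal Nr)"
      using tonelli by (intro mult_left_mono) auto
    also have "\<dots> = ennreal (A * B * Nr)" using A B Nr0 by (simp add: ennreal_mult mult.assoc)
    finally show ?thesis .
  qed
  have Tint: "integrable lborel (\<lambda>x. indicator P x *\<^sub>R (cmod (T x))\<^sup>2)"
  proof (rule integrableI_bounded)
    show "(\<lambda>x. indicator P x *\<^sub>R (cmod (T x))\<^sup>2) \<in> borel_measurable lborel" by measurable
    have "(\<integral>\<^sup>+x. ennreal (norm (indicator P x *\<^sub>R (cmod (T x))\<^sup>2)) \<partial>lborel)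
        = (\<integral>\<^sup>+x. ennreal ((cmod (T x))\<^sup>2) * indicator P x \<partial>lborel)"
      by (intro nn_integral_cong) (auto split: split_indicator)
    also have "\<dots> < \<infinity>" using Tnn by (simp add: le_less_trans)
    finally show "(\<integral>\<^sup>+x. ennreal (norm (indicator P x *\<^sub>R (cmod (T x))\<^sup>2)) \<partial>lborel) < \<infinity>" .
  qed
  have TL2: "T \<in> L2pos" unfolding L2pos_def set_integrable_def using Tint Tm by (auto simp: P_def)
  have Tnorm: "L2norm T \<le> sqrt (A*B) * L2norm f"
  proof -
    have "(LINT x:P|lborel. (cmod (T x))\<^sup>2) = enn2real (\<integral>\<^sup>+x. ennreal (indicator P x *\<^sub>R (cmod (T x))\<^sup>2) \<partial>lborel)"
      unfolding set_lebesgue_integral_def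
      by (intro integral_eq_nn_integral) (auto split: split_indicator)
    also have "(\<integral>\<^sup>+x. ennreal (indicator P x *\<^sub>R (cmod (T x))\<^sup>2) \<partial>lborel)
        = (\<integral>\<^sup>+x. ennreal ((cmod (T x))\<^sup>2) * indicator P x \<partial>lborel)"
      by (intro nn_integral_cong) (auto split: split_indicator)
    also have "enn2real \<dots> \<le> A * B * Nr"
      using Tnn A B Nr0 by (intro enn2real_leI) auto
    finally have "(LINT x:P|lborel. (cmod (T x))\<^sup>2) \<le> A * B * Nr" .
    then have "L2norm T \<le> sqrt (A * B * Nr)" unfolding L2norm_def P_def by simp
    also have "\<dots> = sqrt (A*B) * L2norm f" by (simp add: L2f real_sqrt_mult)
    finally show ?thesis .
  qed
  have AEI: "AE x in lborel. I x * indicator P x \<noteq> \<infinity>"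
  proof (rule nn_integral_PInf_AE)
    show "(\<lambda>x. I x * indicator P x) \<in> borel_measurable lborel" by measurable
    show "(\<integral>\<^sup>+x. I x * indicator P x \<partial>lborel) \<noteq> \<infinity>"
      using tonelli by (auto simp: top_unique ennreal_mult[symmetric] A B Nr0 B)
  qed
  have AEint: "AE x in lborel. 0 < x \<longrightarrow> set_integrable lborel {0<..} (\<lambda>y. complex_of_real (K x y) * f y)"
    using AEI
  proof (rule AE_mp, intro AE_I2 impI)
    fix x assume Ix: "I x * indicator P x \<noteq> \<infinity>" and x: "0 < x"
    then have "I x \<noteq> \<infinity>" by (simp add: P_def)
    then have "ennreal A * I x < \<infinity>" by (simp add: ennreal_mult_less_top less_top)
    then have "(J x)\<^sup>2 < \<infinity>" using CS[OF x] by (simp add: le_less_trans)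
    then have Jfin: "J x < \<infinity>" by (simp add: power_less_top_ennreal)
    show "set_integrable lborel {0<..} (\<lambda>y. complex_of_real (K x y) * f y)"
      unfolding set_integrable_def
    proof (rule integrableI_bounded)
      show "(\<lambda>y. indicator {0<..} y *\<^sub>R (complex_of_real (K x y) * f y)) \<in> borel_measurable lborel"
        by measurable
      have "(\<integral>\<^sup>+y. ennreal (norm (indicator {0<..} y *\<^sub>R (complex_of_real (K x y) * f y))) \<partial>lborel) = J x"
        unfolding J_def P_def by (intro nn_integral_cong) (auto simp: norm_mult Knn split: split_indicator)
      then show "(\<integral>\<^sup>+y. ennreal (norm (indicator {0<..} y *\<^sub>R (complex_of_real (K x y) * f y))) \<partial>lborel) < \<infinity>"
        using Jfin by simp
    qed
  qed
  show ?thesis using AEint TL2 Tnorm unfolding T_def by auto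
qed


lemma borel_measurable_cnj[measurable]: "(cnj :: complex \<Rightarrow> complex) \<in> borel_measurable borel"
  by (intro borel_measurable_continuous_onI continuous_intros)

lemma tonelli_col:
  fixes K :: "real \<Rightarrow> real \<Rightarrow> real" and h :: "real \<Rightarrow> real"
  assumes Km[measurable]: "(\<lambda>(x,y). K x y) \<in> borel_measurable (lborel \<Otimes>\<^sub>M lborel)"
  and Knn: "\<And>x y. 0 \<le> K x y" and B: "0 \<le> B"
  and col: "\<And>y. 0 < y \<Longrightarrow> (\<integral>\<^sup>+x. ennreal (K x y) * indicator {0<..} x \<partial>lborel) \<le> ennreal B"
  and hm[measurable]: "h \<in> borel_measurable lborel" and hnn: "\<And>y. 0 \<le> h y"
  shows "(\<integral>\<^sup>+x. (\<integral>\<^sup>+y. ennreal (K x y * h y) * indicator {0<..} y \<partial>lborel) * indicator {0<..} x \<partial>lborel)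
     \<le> ennreal B * (\<integral>\<^sup>+y. ennreal (h y) * indicator {0<..} y \<partial>lborel)"
proof -
  define P :: "real set" where "P = {0<..}"
  have Pm[measurable]: "P \<in> sets lborel" unfolding P_def by simp
  have "(\<integral>\<^sup>+x. (\<integral>\<^sup>+y. ennreal (K x y * h y) * indicator P y \<partial>lborel) * indicator P x \<partial>lborel)
     = (\<integral>\<^sup>+x. (\<integral>\<^sup>+y. ennreal (K x y * h y) * indicator P y * indicator P x \<partial>lborel) \<partial>lborel)"
    by (intro nn_integral_cong nn_integral_multc[symmetric]) auto
  also have "\<dots> = (\<integral>\<^sup>+y. (\<integral>\<^sup>+x. ennreal (K x y * h y) * indicator P y * indicator P x \<partial>lborel) \<partial>lborel)"
    by (intro lborel_pair.Fubini'[symmetric]) measurable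
  also have "\<dots> = (\<integral>\<^sup>+y. (ennreal (h y) * indicator P y) * (\<integral>\<^sup>+x. ennreal (K x y) * indicator P x \<partial>lborel) \<partial>lborel)"
  proof (intro nn_integral_cong)
    fix y
    have "(\<integral>\<^sup>+x. ennreal (K x y * h y) * indicator P y * indicator P x \<partial>lborel)
       = (\<integral>\<^sup>+x. (ennreal (h y) * indicator P y) * (ennreal (K x y) * indicator P x) \<partial>lborel)"
      by (intro nn_integral_cong) (simp add: ennreal_mult Knn hnn mult_ac)
    also have "\<dots> = (ennreal (h y) * indicator P y) * (\<integral>\<^sup>+x. ennreal (K x y) * indicator P x \<partial>lborel)"
      by (intro nn_integral_cmult) measurable
    finally show "(\<integral>\<^sup>+x. ennreal (K x y * h y) * indicator P y * indicator P x \<partial>lborel)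
       = (ennreal (h y) * indicator P y) * (\<integral>\<^sup>+x. ennreal (K x y) * indicator P x \<partial>lborel)" .
  qed
  also have "\<dots> \<le> (\<integral>\<^sup>+y. (ennreal (h y) * indicator P y) * ennreal B \<partial>lborel)"
  proof (intro nn_integral_mono)
    fix y
    show "(ennreal (h y) * indicator P y) * (\<integral>\<^sup>+x. ennreal (K x y) * indicator P x \<partial>lborel)
        \<le> (ennreal (h y) * indicator P y) * ennreal B"
      using col[of y] by (cases "y \<in> P") (auto simp: P_def intro: mult_left_mono)
  qed
  also have "\<dots> = (\<integral>\<^sup>+y. ennreal (h y) * indicator P y \<partial>lborel) * ennreal B"
    by (rule nn_integral_multc) measurable
  finally show ?thesis unfolding P_def by (simp add: mult.commute)
qed

lemma row_int:
  fixes K :: "real \<Rightarrow> real \<Rightarrow> real" and h :: "real \<Rightarrow> real"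
  assumes Km[measurable]: "(\<lambda>(x,y). K x y) \<in> borel_measurable (lborel \<Otimes>\<^sub>M lborel)"
  and Knn: "\<And>x y. 0 \<le> K x y" and A: "0 \<le> A"
  and row: "\<And>x. 0 < x \<Longrightarrow> (\<integral>\<^sup>+y. ennreal (K x y) * indicator {0<..} y \<partial>lborel) \<le> ennreal A"
  and hm[measurable]: "h \<in> borel_measurable lborel" and hnn: "\<And>y. 0 \<le> h y"
  shows "(\<integral>\<^sup>+x. (\<integral>\<^sup>+y. ennreal (K x y * h x) * indicator {0<..} y \<partial>lborel) * indicator {0<..} x \<partial>lborel)
     \<le> ennreal A * (\<integral>\<^sup>+x. ennreal (h x) * indicator {0<..} x \<partial>lborel)"
proof -
  define P :: "real set" where "P = {0<..}"
  have Pm[measurable]: "P \<in> sets lborel" unfolding P_def by simp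
  have "(\<integral>\<^sup>+x. (\<integral>\<^sup>+y. ennreal (K x y * h x) * indicator P y \<partial>lborel) * indicator P x \<partial>lborel)
     = (\<integral>\<^sup>+x. (ennreal (h x) * indicator P x) * (\<integral>\<^sup>+y. ennreal (K x y) * indicator P y \<partial>lborel) \<partial>lborel)"
  proof (intro nn_integral_cong)
    fix x
    have "(\<integral>\<^sup>+y. ennreal (K x y * h x) * indicator P y \<partial>lborel)
       = (\<integral>\<^sup>+y. ennreal (h x) * (ennreal (K x y) * indicator P y) \<partial>lborel)"
      by (intro nn_integral_cong) (simp add: ennreal_mult Knn hnn mult_ac)
    also have "\<dots> = ennreal (h x) * (\<integral>\<^sup>+y. ennreal (K x y) * indicator P y \<partial>lborel)"
      by (intro nn_integral_cmult) measurable
    finally show "(\<integral>\<^sup>+y. ennreal (K x y * h x) * indicator P y \<partial>lborel) * indicator P x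
       = (ennreal (h x) * indicator P x) * (\<integral>\<^sup>+y. ennreal (K x y) * indicator P y \<partial>lborel)"
      by (simp add: mult_ac)
  qed
  also have "\<dots> \<le> (\<integral>\<^sup>+x. (ennreal (h x) * indicator P x) * ennreal A \<partial>lborel)"
  proof (intro nn_integral_mono)
    fix x
    show "(ennreal (h x) * indicator P x) * (\<integral>\<^sup>+y. ennreal (K x y) * indicator P y \<partial>lborel)
        \<le> (ennreal (h x) * indicator P x) * ennreal A"
      using row[of x] by (cases "x \<in> P") (auto simp: P_def intro: mult_left_mono)
  qed
  also have "\<dots> = (\<integral>\<^sup>+x. ennreal (h x) * indicator P x \<partial>lborel) * ennreal A"
    by (rule nn_integral_multc) measurable
  finally show ?thesis unfolding P_def by (simp add: mult.commute)
qed

lemma L2pos_nn: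
  assumes "f \<in> L2pos"
  shows "(\<integral>\<^sup>+y. ennreal ((cmod (f y))\<^sup>2) * indicator {0<..} y \<partial>lborel) < \<infinity>"
proof -
  have fint: "integrable lborel (\<lambda>y. indicator {0<..} y *\<^sub>R (cmod (f y))\<^sup>2)"
    using assms unfolding L2pos_def set_integrable_def by auto
  have "(\<integral>\<^sup>+y. ennreal ((cmod (f y))\<^sup>2) * indicator {0<..} y \<partial>lborel)
      = (\<integral>\<^sup>+y. ennreal (indicator {0<..} y *\<^sub>R (cmod (f y))\<^sup>2) \<partial>lborel)"
    by (intro nn_integral_cong) (auto split: split_indicator)
  also have "\<dots> = ennreal (integral\<^sup>L lborel (\<lambda>y. indicator {0<..} y *\<^sub>R (cmod (f y))\<^sup>2))"
    by (intro nn_integral_eq_integral fint) (auto split: split_indicator)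
  finally show ?thesis by simp
qed

lemma schur_sa:
  fixes K :: "real \<Rightarrow> real \<Rightarrow> real" and A B :: real
  assumes Km[measurable]: "(\<lambda>(x,y). K x y) \<in> borel_measurable (lborel \<Otimes>\<^sub>M lborel)"
  and Knn: "\<And>x y. 0 \<le> K x y" and Ksym: "\<And>x y. K x y = K y x"
  and A: "0 \<le> A" and B: "0 \<le> B"
  and row: "\<And>x. 0 < x \<Longrightarrow> (\<integral>\<^sup>+y. ennreal (K x y) * indicator {0<..} y \<partial>lborel) \<le> ennreal A"
  and col: "\<And>y. 0 < y \<Longrightarrow> (\<integral>\<^sup>+x. ennreal (K x y) * indicator {0<..} x \<partial>lborel) \<le> ennreal B"
  and f: "f \<in> L2pos" and g: "g \<in> L2pos"
  shows "(LINT x:{0<..}|lborel. int_op K f x * cnj (g x)) = (LINT x:{0<..}|lborel. f x * cnj (int_op K g x))"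
proof -
  define P :: "real set" where "P = {0<..}"
  have Pm[measurable]: "P \<in> sets lborel" unfolding P_def by simp
  have fm[measurable]: "f \<in> borel_measurable lborel" using f unfolding L2pos_def by auto
  have gm[measurable]: "g \<in> borel_measurable lborel" using g unfolding L2pos_def by auto
  define H where "H x y = complex_of_real (indicator P x * indicator P y * K x y) * f y * cnj (g x)" for x y
  have Hm[measurable]: "(\<lambda>(x,y). H x y) \<in> borel_measurable (lborel \<Otimes>\<^sub>M lborel)"
    unfolding H_def by measurable
  have Hint: "integrable (lborel \<Otimes>\<^sub>M lborel) (\<lambda>(x,y). H x y)"
  proof (rule integrableI_bounded)
    show "(\<lambda>(x,y). H x y) \<in> borel_measurable (lborel \<Otimes>\<^sub>M lborel)" by (rule Hm)
    have "(\<integral>\<^sup>+z. ennreal (norm (case z of (x,y) \<Rightarrow> H x y)) \<partial>(lborel \<Otimes>\<^sub>M lborel))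
        = (\<integral>\<^sup>+x. (\<integral>\<^sup>+y. ennreal (norm (H x y)) \<partial>lborel) \<partial>lborel)"
    proof -
      have Hnm: "(\<lambda>z. ennreal (cmod (case z of (x,y) \<Rightarrow> H x y))) \<in> borel_measurable (lborel \<Otimes>\<^sub>M lborel)"
        by (rule measurable_compose[OF Hm]) measurable
      show ?thesis by (subst lborel.nn_integral_fst[symmetric, OF Hnm]) simp
    qed
    also have "\<dots> \<le> (\<integral>\<^sup>+x. (\<integral>\<^sup>+y. ennreal (K x y * (cmod (f y))\<^sup>2) * indicator P y \<partial>lborel) * indicator P x
                      + (\<integral>\<^sup>+y. ennreal (K x y * (cmod (g x))\<^sup>2) * indicator P y \<partial>lborel) * indicator P x \<partial>lborel)"
    proof (intro nn_integral_mono)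
      fix x
      have "(\<integral>\<^sup>+y. ennreal (norm (H x y)) \<partial>lborel)
         \<le> (\<integral>\<^sup>+y. ennreal (K x y * (cmod (f y))\<^sup>2) * indicator P y * indicator P x
                      + ennreal (K x y * (cmod (g x))\<^sup>2) * indicator P y * indicator P x \<partial>lborel)"
      proof (intro nn_integral_mono)
        fix y
        have ab: "cmod (f y) * cmod (g x) \<le> (cmod (f y))\<^sup>2 + (cmod (g x))\<^sup>2"
          by (smt (verit) norm_ge_zero power2_eq_square mult_mono mult_nonneg_nonneg
              sum_squares_bound)
        have "K x y * (cmod (f y) * cmod (g x)) \<le> K x y * (cmod (f y))\<^sup>2 + K x y * (cmod (g x))\<^sup>2"
          using mult_left_mono[OF ab Knn[of x y]] by (simp add: algebra_simps)
        then show "ennreal (norm (H x y))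
         \<le> ennreal (K x y * (cmod (f y))\<^sup>2) * indicator P y * indicator P x
                      + ennreal (K x y * (cmod (g x))\<^sup>2) * indicator P y * indicator P x"
          unfolding H_def
          by (auto simp: norm_mult Knn ennreal_plus[symmetric] mult_ac split: split_indicator
                   simp del: ennreal_plus intro!: ennreal_leI)
      qed
      also have "\<dots> = (\<integral>\<^sup>+y. ennreal (K x y * (cmod (f y))\<^sup>2) * indicator P y \<partial>lborel) * indicator P x
                      + (\<integral>\<^sup>+y. ennreal (K x y * (cmod (g x))\<^sup>2) * indicator P y \<partial>lborel) * indicator P x"
        by (subst nn_integral_add) (measurable, simp add: nn_integral_multc)
      finally show "(\<integral>\<^sup>+y. ennreal (norm (H x y)) \<partial>lborel)
         \<le> (\<integral>\<^sup>+y. ennreal (K x y * (cmod (f y))\<^sup>2) * indicator P y \<partial>lborel) * indicator P x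
                      + (\<integral>\<^sup>+y. ennreal (K x y * (cmod (g x))\<^sup>2) * indicator P y \<partial>lborel) * indicator P x" .
    qed
    also have "\<dots> = (\<integral>\<^sup>+x. (\<integral>\<^sup>+y. ennreal (K x y * (cmod (f y))\<^sup>2) * indicator P y \<partial>lborel) * indicator P x \<partial>lborel)
                  + (\<integral>\<^sup>+x. (\<integral>\<^sup>+y. ennreal (K x y * (cmod (g x))\<^sup>2) * indicator P y \<partial>lborel) * indicator P x \<partial>lborel)"
      by (rule nn_integral_add) measurable
    also have "\<dots> \<le> ennreal B * (\<integral>\<^sup>+y. ennreal ((cmod (f y))\<^sup>2) * indicator P y \<partial>lborel)
                  + ennreal A * (\<integral>\<^sup>+x. ennreal ((cmod (g x))\<^sup>2) * indicator P x \<partial>lborel)"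
      unfolding P_def
      by (intro add_mono tonelli_col[OF Km Knn B col] row_int[OF Km Knn A row]) auto
    also have "\<dots> < \<infinity>"
      using L2pos_nn[OF f] L2pos_nn[OF g] unfolding P_def
      by (simp add: ennreal_mult_less_top less_top)
    finally show "(\<integral>\<^sup>+z. ennreal (norm (case z of (x,y) \<Rightarrow> H x y)) \<partial>(lborel \<Otimes>\<^sub>M lborel)) < \<infinity>" .
  qed
  have L: "indicator P x *\<^sub>R (int_op K f x * cnj (g x)) = (\<integral>y. H x y \<partial>lborel)" for x
  proof -
    have "(\<integral>y. H x y \<partial>lborel) = (\<integral>y. (indicator P y *\<^sub>R (complex_of_real (K x y) * f y)) * (indicator P x *\<^sub>R cnj (g x)) \<partial>lborel)"
      unfolding H_def by (intro Bochner_Integration.integral_cong) (auto split: split_indicator)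
    also have "\<dots> = (\<integral>y. indicator P y *\<^sub>R (complex_of_real (K x y) * f y) \<partial>lborel) * (indicator P x *\<^sub>R cnj (g x))"
      by (rule integral_mult_left_zero)
    finally show ?thesis unfolding int_op_def set_lebesgue_integral_def P_def
      by (auto split: split_indicator)
  qed
  have R: "indicator P y *\<^sub>R (f y * cnj (int_op K g y)) = (\<integral>x. H x y \<partial>lborel)" for y
  proof -
    have "(\<integral>x. H x y \<partial>lborel) = (\<integral>x. (indicator P y *\<^sub>R f y) * cnj (indicator P x *\<^sub>R (complex_of_real (K y x) * g x)) \<partial>lborel)"
      unfolding H_def by (intro Bochner_Integration.integral_cong) (auto simp: Ksym[of _ y] split: split_indicator)
    also have "\<dots> = (indicator P y *\<^sub>R f y) * (\<integral>x. cnj (indicator P x *\<^sub>R (complex_of_real (K y x) * g x)) \<partial>lborel)"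
      by (rule integral_mult_right_zero)
    also have "\<dots> = (indicator P y *\<^sub>R f y) * cnj (\<integral>x. indicator P x *\<^sub>R (complex_of_real (K y x) * g x) \<partial>lborel)"
      by (simp only: Bochner_Integration.integral_cnj)
    finally show ?thesis unfolding int_op_def set_lebesgue_integral_def P_def
      by (auto split: split_indicator)
  qed
  have "(LINT x:P|lborel. int_op K f x * cnj (g x)) = (\<integral>x. (\<integral>y. H x y \<partial>lborel) \<partial>lborel)"
    unfolding set_lebesgue_integral_def L ..
  also have "\<dots> = integral\<^sup>L (lborel \<Otimes>\<^sub>M lborel) (\<lambda>(x,y). H x y)"
    by (rule lborel_pair.integral_fst[OF Hint])
  also have "\<dots> = (\<integral>y. (\<integral>x. H x y \<partial>lborel) \<partial>lborel)"
    by (rule lborel_pair.integral_snd[OF Hint, symmetric])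
  also have "\<dots> = (LINT y:P|lborel. f y * cnj (int_op K g y))"
    unfolding set_lebesgue_integral_def R ..
  finally show ?thesis unfolding P_def .
qed


lemma piece:
  fixes C V W :: real and S :: "real set" and g :: "real \<Rightarrow> real"
  assumes C: "0 \<le> C" and S: "S \<in> sets borel" and g: "g \<in> borel_measurable borel"
  and V: "(\<integral>\<^sup>+t. ennreal (indicator S t * g t) \<partial>lborel) \<le> ennreal V"
  and W: "C * V \<le> W"
  shows "(\<integral>\<^sup>+t. ennreal (indicator S t * (C * g t)) \<partial>lborel) \<le> ennreal W"
proof -
  have "(\<integral>\<^sup>+t. ennreal (indicator S t * (C * g t)) \<partial>lborel) = (\<integral>\<^sup>+t. ennreal C * ennreal (indicator S t * g t) \<partial>lborel)"
    using C by (intro nn_integral_cong) (simp add: ennreal_mult'[symmetric] mult_ac)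
  also have "\<dots> = ennreal C * (\<integral>\<^sup>+t. ennreal (indicator S t * g t) \<partial>lborel)"
    using S g by (intro nn_integral_cmult) auto
  also have "\<dots> \<le> ennreal C * ennreal V" using V by (intro mult_left_mono) auto
  also have "\<dots> = ennreal (C * V)" using C by (simp add: ennreal_mult')
  also have "\<dots> \<le> ennreal W" using W by (intro ennreal_leI)
  finally show ?thesis .
qed

lemma enn3: "0 \<le> a \<Longrightarrow> 0 \<le> b \<Longrightarrow> 0 \<le> c \<Longrightarrow> ennreal a + ennreal b + ennreal c = ennreal (a+b+c)"
  by (simp add: ennreal_plus)

lemma ye_bound: "0 \<le> y \<Longrightarrow> y * exp (-(1/2) * y) \<le> (2::real)"
proof -
  assume y: "0 \<le> y"
  have "1 + y/2 \<le> exp (y/2)" using exp_ge_add_one_self[of "y/2"] by simp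
  then have "y \<le> 2 * exp (y/2)" by linarith
  then have "y * exp (-(1/2) * y) \<le> 2 * exp (y/2) * exp (-(1/2) * y)"
    by (intro mult_right_mono) auto
  also have "\<dots> = 2" by (simp add: mult.assoc exp_add[symmetric])
  finally show ?thesis .
qed

lemma ye_bound2: "0 \<le> \<kappa> \<Longrightarrow> 0 \<le> P \<Longrightarrow> \<kappa> * P * exp (-(\<kappa>/2) * P) \<le> (2::real)"
proof -
  assume "0 \<le> \<kappa>" "0 \<le> P"
  then have "(\<kappa> * P) * exp (-(1/2) * (\<kappa> * P)) \<le> 2" by (intro ye_bound) simp
  moreover have "-(1/2) * (\<kappa> * P) = -(\<kappa>/2) * P" by simp
  ultimately show ?thesis by simp
qed

lemma row_int2:
  fixes \<alpha> c \<kappa> x :: real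
  assumes a: "0 < \<alpha>" "\<alpha> < 1" and c: "c = \<kappa> * (1+\<alpha>)" and k: "0 < \<kappa>" and x: "0 < x"
  shows "(\<integral>\<^sup>+\<rho>. ennreal (Kx (2*\<alpha>) \<alpha> c \<kappa> x \<rho>) * indicator {0<..} \<rho> \<partial>lborel) \<le> ennreal 7"
proof -
  have c0: "0 < c" using c k a by simp
  have "(\<integral>\<^sup>+\<rho>. ennreal (Kx (2*\<alpha>) \<alpha> c \<kappa> x \<rho>) * indicator {0<..} \<rho> \<partial>lborel)
     \<le> (\<integral>\<^sup>+\<rho>. ennreal (R1 \<alpha> c \<kappa> x \<rho>) + ennreal (R2 \<alpha> c \<kappa> x \<rho>) + ennreal (R3 \<alpha> c \<kappa> x \<rho>) \<partial>lborel)"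
  proof (intro nn_integral_mono)
    fix \<rho>
    show "ennreal (Kx (2*\<alpha>) \<alpha> c \<kappa> x \<rho>) * indicator {0<..} \<rho>
      \<le> ennreal (R1 \<alpha> c \<kappa> x \<rho>) + ennreal (R2 \<alpha> c \<kappa> x \<rho>) + ennreal (R3 \<alpha> c \<kappa> x \<rho>)"
    proof (cases "0 < \<rho>")
      case True
      have n1: "0 \<le> R1 \<alpha> c \<kappa> x \<rho>" "0 \<le> R2 \<alpha> c \<kappa> x \<rho>" "0 \<le> R3 \<alpha> c \<kappa> x \<rho>"
        unfolding R1_def R2_def R3_def using c0 by auto
      have "ennreal (Kx (2*\<alpha>) \<alpha> c \<kappa> x \<rho>) \<le> ennreal (R1 \<alpha> c \<kappa> x \<rho> + R2 \<alpha> c \<kappa> x \<rho> + R3 \<alpha> c \<kappa> x \<rho>)"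
        using row_dom2[OF a c0 k x True] by (intro ennreal_leI)
      then show ?thesis using True n1 by (simp add: ennreal_plus)
    qed simp
  qed
  also have "\<dots> = (\<integral>\<^sup>+\<rho>. ennreal (R1 \<alpha> c \<kappa> x \<rho>) \<partial>lborel) + (\<integral>\<^sup>+\<rho>. ennreal (R2 \<alpha> c \<kappa> x \<rho>) \<partial>lborel)
      + (\<integral>\<^sup>+\<rho>. ennreal (R3 \<alpha> c \<kappa> x \<rho>) \<partial>lborel)"
  proof -
    have m1: "(\<lambda>\<rho>. ennreal (R1 \<alpha> c \<kappa> x \<rho>)) \<in> borel_measurable lborel" unfolding R1_def by measurable
    have m2: "(\<lambda>\<rho>. ennreal (R2 \<alpha> c \<kappa> x \<rho>)) \<in> borel_measurable lborel" unfolding R2_def by measurable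
    have m3: "(\<lambda>\<rho>. ennreal (R3 \<alpha> c \<kappa> x \<rho>)) \<in> borel_measurable lborel" unfolding R3_def by measurable
    show ?thesis using m1 m2 m3 by (simp add: nn_integral_add borel_measurable_add)
  qed
  also have "\<dots> \<le> ennreal (1+\<alpha>) + ennreal (2*(1+\<alpha>)) + ennreal ((1+\<alpha>)/2)"
  proof (intro add_mono)
    have xa: "0 < x powr \<alpha>" using x by simp
    show "(\<integral>\<^sup>+\<rho>. ennreal (R1 \<alpha> c \<kappa> x \<rho>) \<partial>lborel) \<le> ennreal (1+\<alpha>)"
      unfolding R1_def
    proof (rule piece[OF _ _ _ N1[of "\<kappa> * x powr \<alpha>" x]])
      show "c * x powr \<alpha> * (1 / (\<kappa> * x powr \<alpha>)) \<le> 1 + \<alpha>" using xa k c by simp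
    qed (use c0 k x in auto)
    show "(\<integral>\<^sup>+\<rho>. ennreal (R3 \<alpha> c \<kappa> x \<rho>) \<partial>lborel) \<le> ennreal ((1+\<alpha>)/2)"
      unfolding R3_def
    proof (rule piece[OF _ _ _ eq_refl[OF N2[of "\<kappa> * x powr \<alpha>" x]]])
      show "c / 2 * x powr \<alpha> * (1 / (\<kappa> * x powr \<alpha>)) \<le> (1 + \<alpha>) / 2" using xa k c by simp
    qed (use c0 k x in auto)
    show "(\<integral>\<^sup>+\<rho>. ennreal (R2 \<alpha> c \<kappa> x \<rho>) \<partial>lborel) \<le> ennreal (2*(1+\<alpha>))"
      unfolding R2_def
    proof (rule piece[OF _ _ _ eq_refl[OF N3[of "-\<alpha>/2" x]]])
      define P where "P = x powr (1+\<alpha>)"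
      have P0: "0 \<le> P" unfolding P_def by simp
      have Q: "x powr (3 * \<alpha> / 2) * x powr (- \<alpha> / 2 + 1) = P" unfolding P_def
        by (simp add: powr_add[symmetric] add.commute)
      have alg: "c / 2 * X * E * (Y / (- \<alpha> / 2 + 1)) = (1+\<alpha>) * (\<kappa> * (X * Y) * E) / (2 - \<alpha>)" for X Y E
        using a unfolding c by (simp add: field_simps)
      have "c / 2 * x powr (3 * \<alpha> / 2) * exp (- (\<kappa> / 2) * x powr (1 + \<alpha>)) * (x powr (- \<alpha> / 2 + 1) / (- \<alpha> / 2 + 1))
          = (1+\<alpha>) * (\<kappa> * P * exp (-(\<kappa>/2) * P)) / (2 - \<alpha>)"
        unfolding alg Q by (simp add: P_def)
      also have "\<dots> \<le> (1+\<alpha>) * 2 / 1"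
        using ye_bound2[of \<kappa> P] P0 k a
        by (intro divide_mono mult_left_mono) auto
      finally show "c / 2 * x powr (3 * \<alpha> / 2) * exp (- (\<kappa> / 2) * x powr (1 + \<alpha>)) * (x powr (- \<alpha> / 2 + 1) / (- \<alpha> / 2 + 1))
          \<le> 2 * (1 + \<alpha>)" by simp
    qed (use c0 k x a in auto)
  qed
  also have "\<dots> = ennreal ((1+\<alpha>) + 2*(1+\<alpha>) + (1+\<alpha>)/2)"
    using a by (intro enn3) auto
  also have "\<dots> \<le> ennreal 7"
    using a by (intro ennreal_leI) (simp add: field_simps)
  finally show ?thesis .
qed


lemma col_int2:
  fixes \<alpha> c \<kappa> \<rho> :: real
  assumes a: "0 < \<alpha>" "\<alpha> < 1" and c: "c = \<kappa> * (1+\<alpha>)" and k: "0 < \<kappa>" and r: "0 < \<rho>"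
  shows "(\<integral>\<^sup>+x. ennreal (Kx (2*\<alpha>) \<alpha> c \<kappa> x \<rho>) * indicator {0<..} x \<partial>lborel) \<le> ennreal 9"
proof -
  have c0: "0 < c" using c k a by simp
  have "(\<integral>\<^sup>+x. ennreal (Kx (2*\<alpha>) \<alpha> c \<kappa> x \<rho>) * indicator {0<..} x \<partial>lborel)
     \<le> (\<integral>\<^sup>+x. ennreal (C1 \<alpha> c \<kappa> \<rho> x) + ennreal (C2 \<alpha> c \<kappa> \<rho> x) + ennreal (C3 \<alpha> c \<kappa> \<rho> x) \<partial>lborel)"
  proof (intro nn_integral_mono)
    fix x
    show "ennreal (Kx (2*\<alpha>) \<alpha> c \<kappa> x \<rho>) * indicator {0<..} x
      \<le> ennreal (C1 \<alpha> c \<kappa> \<rho> x) + ennreal (C2 \<alpha> c \<kappa> \<rho> x) + ennreal (C3 \<alpha> c \<kappa> \<rho> x)"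
    proof (cases "0 < x")
      case True
      have n1: "0 \<le> C1 \<alpha> c \<kappa> \<rho> x" "0 \<le> C2 \<alpha> c \<kappa> \<rho> x" "0 \<le> C3 \<alpha> c \<kappa> \<rho> x"
        unfolding C1_def C2_def C3_def using c0 k by auto
      have "ennreal (Kx (2*\<alpha>) \<alpha> c \<kappa> x \<rho>) \<le> ennreal (C1 \<alpha> c \<kappa> \<rho> x + C2 \<alpha> c \<kappa> \<rho> x + C3 \<alpha> c \<kappa> \<rho> x)"
        using col_dom2[OF a c0 k True r] by (intro ennreal_leI)
      then show ?thesis using True n1 by (simp add: ennreal_plus)
    qed simp
  qed
  also have "\<dots> = (\<integral>\<^sup>+x. ennreal (C1 \<alpha> c \<kappa> \<rho> x) \<partial>lborel) + (\<integral>\<^sup>+x. ennreal (C2 \<alpha> c \<kappa> \<rho> x) \<partial>lborel)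
      + (\<integral>\<^sup>+x. ennreal (C3 \<alpha> c \<kappa> \<rho> x) \<partial>lborel)"
  proof -
    have m1: "(\<lambda>x. ennreal (C1 \<alpha> c \<kappa> \<rho> x)) \<in> borel_measurable lborel" unfolding C1_def by measurable
    have m2: "(\<lambda>x. ennreal (C2 \<alpha> c \<kappa> \<rho> x)) \<in> borel_measurable lborel" unfolding C2_def by measurable
    have m3: "(\<lambda>x. ennreal (C3 \<alpha> c \<kappa> \<rho> x)) \<in> borel_measurable lborel" unfolding C3_def by measurable
    show ?thesis using m1 m2 m3 by (simp add: nn_integral_add borel_measurable_add)
  qed
  also have "\<dots> \<le> ennreal ((1+\<alpha>)/2) + ennreal (2*(1+\<alpha>)) + ennreal 4"
  proof (intro add_mono)
    have ra: "0 < \<rho> powr \<alpha>" using r by simp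
    show "(\<integral>\<^sup>+x. ennreal (C1 \<alpha> c \<kappa> \<rho> x) \<partial>lborel) \<le> ennreal ((1+\<alpha>)/2)"
      unfolding C1_def
    proof (rule piece[OF _ _ _ N1[of "\<kappa> * \<rho> powr \<alpha>" \<rho>]])
      show "c / 2 * \<rho> powr \<alpha> * (1 / (\<kappa> * \<rho> powr \<alpha>)) \<le> (1 + \<alpha>) / 2" using ra k c by simp
    qed (use c0 k r in auto)
    show "(\<integral>\<^sup>+x. ennreal (C2 \<alpha> c \<kappa> \<rho> x) \<partial>lborel) \<le> ennreal (2*(1+\<alpha>))"
      unfolding C2_def
    proof (rule piece[OF _ _ _ eq_refl[OF N2[of "\<kappa> * \<rho> powr \<alpha>" \<rho>]]])
      show "2 * c * \<rho> powr \<alpha> * (1 / (\<kappa> * \<rho> powr \<alpha>)) \<le> 2 * (1 + \<alpha>)" using ra k c by simp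
    qed (use c0 k r in auto)
    show "(\<integral>\<^sup>+x. ennreal (C3 \<alpha> c \<kappa> \<rho> x) \<partial>lborel) \<le> ennreal 4"
      unfolding C3_def
    proof (rule piece[OF _ _ _ eq_refl[OF N4[of \<alpha> "\<kappa>/2"]]])
      show "c * \<kappa> * (1 / ((1 + \<alpha>) * (\<kappa> / 2)\<^sup>2)) \<le> 4" using k c a by (simp add: power2_eq_square)
    qed (use c0 k a in auto)
  qed
  also have "\<dots> = ennreal ((1+\<alpha>)/2 + 2*(1+\<alpha>) + 4)"
    using a by (intro enn3) auto
  also have "\<dots> \<le> ennreal 9"
    using a by (intro ennreal_leI) (simp add: field_simps)
  finally show ?thesis .
qed


lemma row_int_a:
  fixes \<alpha> c \<kappa> x a :: real
  assumes a: "0 < \<alpha>" "\<alpha> < 1" and c: "c = \<kappa> * (1+\<alpha>)" and k: "0 < \<kappa>" and x: "0 < x"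
    and alo: "-(1-\<alpha>)/2 < a" and ahi: "a \<le> 2*\<alpha>"
    and row2: "(\<integral>\<^sup>+\<rho>. ennreal (Kx (2*\<alpha>) \<alpha> c \<kappa> x \<rho>) * indicator {0<..} \<rho> \<partial>lborel) \<le> ennreal 7"
  shows "(\<integral>\<^sup>+\<rho>. ennreal (Kx a \<alpha> c \<kappa> x \<rho>) * indicator {0<..} \<rho> \<partial>lborel) \<le> ennreal (7 + c*\<kappa> + c)"
proof -
  have c0: "0 < c" using c k a by simp
  show ?thesis
  proof (cases "1 \<le> x")
    case True
    have "(\<integral>\<^sup>+\<rho>. ennreal (Kx a \<alpha> c \<kappa> x \<rho>) * indicator {0<..} \<rho> \<partial>lborel)
        \<le> (\<integral>\<^sup>+\<rho>. ennreal (Kx (2*\<alpha>) \<alpha> c \<kappa> x \<rho>) * indicator {0<..} \<rho> \<partial>lborel)"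
      using Kx_mono_a[OF True ahi, of c \<kappa> \<alpha>] c0 k
      by (intro nn_integral_mono mult_right_mono ennreal_leI) auto
    also have "\<dots> \<le> ennreal 7" by (rule row2)
    also have "\<dots> \<le> ennreal (7 + c*\<kappa> + c)" using c0 k by (intro ennreal_leI) auto
    finally show ?thesis .
  next
    case False
    have "(\<integral>\<^sup>+\<rho>. ennreal (Kx a \<alpha> c \<kappa> x \<rho>) * indicator {0<..} \<rho> \<partial>lborel)
       \<le> (\<integral>\<^sup>+\<rho>. ennreal (HR1 a \<alpha> c \<kappa> x \<rho>) + ennreal (HR2 a \<alpha> c \<kappa> x \<rho>) \<partial>lborel)"
    proof (intro nn_integral_mono)
      fix \<rho>
      show "ennreal (Kx a \<alpha> c \<kappa> x \<rho>) * indicator {0<..} \<rho>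
        \<le> ennreal (HR1 a \<alpha> c \<kappa> x \<rho>) + ennreal (HR2 a \<alpha> c \<kappa> x \<rho>)"
      proof (cases "0 < \<rho>")
        case True
        have n1: "0 \<le> HR1 a \<alpha> c \<kappa> x \<rho>" "0 \<le> HR2 a \<alpha> c \<kappa> x \<rho>"
          unfolding HR1_def HR2_def using c0 k by auto
        have "ennreal (Kx a \<alpha> c \<kappa> x \<rho>) \<le> ennreal (HR1 a \<alpha> c \<kappa> x \<rho> + HR2 a \<alpha> c \<kappa> x \<rho>)"
          using H_dom[OF a c0 k x True] by (intro ennreal_leI)
        then show ?thesis using True n1 by (simp add: ennreal_plus)
      qed simp
    qed
    also have "\<dots> = (\<integral>\<^sup>+\<rho>. ennreal (HR1 a \<alpha> c \<kappa> x \<rho>) \<partial>lborel) + (\<integral>\<^sup>+\<rho>. ennreal (HR2 a \<alpha> c \<kappa> x \<rho>) \<partial>lborel)"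
    proof -
      have m1: "(\<lambda>\<rho>. ennreal (HR1 a \<alpha> c \<kappa> x \<rho>)) \<in> borel_measurable lborel" unfolding HR1_def by measurable
      have m2: "(\<lambda>\<rho>. ennreal (HR2 a \<alpha> c \<kappa> x \<rho>)) \<in> borel_measurable lborel" unfolding HR2_def by measurable
      show ?thesis using m1 m2 by (simp add: nn_integral_add)
    qed
    also have "\<dots> \<le> ennreal (c*\<kappa>) + ennreal c"
    proof (intro add_mono)
      show "(\<integral>\<^sup>+\<rho>. ennreal (HR1 a \<alpha> c \<kappa> x \<rho>) \<partial>lborel) \<le> ennreal (c*\<kappa>)"
        unfolding HR1_def
      proof (rule piece[OF _ _ _ eq_refl[OF N3[of "1 + \<alpha>/2" x]]])
        have "x powr (a - \<alpha>/2) * x powr (1 + \<alpha>/2 + 1) = x powr (a + 2)"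
          by (simp add: powr_add[symmetric])
        moreover have "x powr (a + 2) \<le> 1" using x False alo a by (intro powr_le1) auto
        ultimately have "x powr (a - \<alpha>/2) * (x powr (1 + \<alpha>/2 + 1) / (1 + \<alpha>/2 + 1)) \<le> 1"
          using a x by (simp add: divide_simps)
        then have "c * \<kappa> * (x powr (a - \<alpha>/2) * (x powr (1 + \<alpha>/2 + 1) / (1 + \<alpha>/2 + 1))) \<le> c * \<kappa> * 1"
          using c0 k by (intro mult_left_mono) auto
        then show "c * \<kappa> * x powr (a - \<alpha> / 2) * (x powr (1 + \<alpha> / 2 + 1) / (1 + \<alpha> / 2 + 1)) \<le> c * \<kappa>"
          by (simp add: mult_ac)
      qed (use c0 k x a in auto)
      show "(\<integral>\<^sup>+\<rho>. ennreal (HR2 a \<alpha> c \<kappa> x \<rho>) \<partial>lborel) \<le> ennreal c"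
        unfolding HR2_def
      proof (rule piece[OF _ _ _ eq_refl[OF N2[of "\<kappa> * x powr \<alpha>" x]]])
        have "x powr (a + 1) / x powr \<alpha> = x powr (a + 1 - \<alpha>)"
          by (simp add: powr_diff)
        moreover have "x powr (a + 1 - \<alpha>) \<le> 1" using x False alo a by (intro powr_le1) auto
        ultimately have "x powr (a + 1) / x powr \<alpha> \<le> 1" by simp
        then have "c * (x powr (a + 1) / x powr \<alpha>) \<le> c * 1" using c0 by (intro mult_left_mono) auto
        then show "c * \<kappa> * x powr (a + 1) * (1 / (\<kappa> * x powr \<alpha>)) \<le> c" using k by simp
      qed (use c0 k x a in auto)
    qed
    also have "\<dots> = ennreal (c*\<kappa> + c)" using c0 k by (simp add: ennreal_plus)
    also have "\<dots> \<le> ennreal (7 + c*\<kappa> + c)" by (intro ennreal_leI) auto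
    finally show ?thesis .
  qed
qed


definition HC1 where "HC1 a \<alpha> c \<kappa> x = indicator {0..1} x * ((c*\<kappa>) * x powr (a - \<alpha>/2))"
definition HC2 where "HC2 a \<alpha> c \<kappa> x = indicator {0..1} x * ((c*\<kappa>) * x powr (a + 1))"

lemma col_dom_a:
  fixes \<alpha> c \<kappa> x \<rho> a :: real
  assumes a: "0 < \<alpha>" "\<alpha> < 1" and c0: "0 < c" and k: "0 < \<kappa>" and x: "0 < x" and r: "0 < \<rho>"
    and ahi: "a \<le> 2*\<alpha>"
  shows "Kx a \<alpha> c \<kappa> x \<rho> \<le> C1 \<alpha> c \<kappa> \<rho> x + C2 \<alpha> c \<kappa> \<rho> x + C3 \<alpha> c \<kappa> \<rho> x + HC1 a \<alpha> c \<kappa> x + HC2 a \<alpha> c \<kappa> x"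
proof -
  have n: "0 \<le> C1 \<alpha> c \<kappa> \<rho> x" "0 \<le> C2 \<alpha> c \<kappa> \<rho> x" "0 \<le> C3 \<alpha> c \<kappa> \<rho> x"
     "0 \<le> HC1 a \<alpha> c \<kappa> x" "0 \<le> HC2 a \<alpha> c \<kappa> x"
    unfolding C1_def C2_def C3_def HC1_def HC2_def using c0 k by auto
  show ?thesis
  proof (cases "1 \<le> x")
    case True
    have "Kx a \<alpha> c \<kappa> x \<rho> \<le> Kx (2*\<alpha>) \<alpha> c \<kappa> x \<rho>"
      using Kx_mono_a[OF True ahi, of c \<kappa> \<alpha>] c0 k by auto
    also have "\<dots> \<le> C1 \<alpha> c \<kappa> \<rho> x + C2 \<alpha> c \<kappa> \<rho> x + C3 \<alpha> c \<kappa> \<rho> x"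
      by (rule col_dom2[OF a c0 k x r])
    finally show ?thesis using n by simp
  next
    case False
    have h1: "HR1 a \<alpha> c \<kappa> x \<rho> \<le> HC1 a \<alpha> c \<kappa> x"
    proof (cases "\<rho> \<le> x")
      case True
      have "\<rho> powr (1 + \<alpha>/2) \<le> 1" using True False r a by (intro powr_le1) auto
      then have "c * \<kappa> * x powr (a - \<alpha>/2) * \<rho> powr (1 + \<alpha>/2) \<le> c * \<kappa> * x powr (a - \<alpha>/2) * 1"
        using c0 k by (intro mult_left_mono) auto
      then show ?thesis unfolding HR1_def HC1_def using True False r x by simp
    next
      case False
      then show ?thesis unfolding HR1_def using n by simp
    qed
    have h2: "HR2 a \<alpha> c \<kappa> x \<rho> \<le> HC2 a \<alpha> c \<kappa> x"
    proof (cases "x \<le> \<rho>")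
      case True
      have "exp (-(\<kappa> * x powr \<alpha>) * (\<rho> - x)) \<le> 1" using True k by simp
      then have "c * \<kappa> * x powr (a + 1) * exp (-(\<kappa> * x powr \<alpha>) * (\<rho> - x)) \<le> c * \<kappa> * x powr (a + 1) * 1"
        using c0 k by (intro mult_left_mono) auto
      then show ?thesis unfolding HR2_def HC2_def using True False r x by simp
    next
      case False
      then show ?thesis unfolding HR2_def using n by simp
    qed
    have "Kx a \<alpha> c \<kappa> x \<rho> \<le> HR1 a \<alpha> c \<kappa> x \<rho> + HR2 a \<alpha> c \<kappa> x \<rho>" by (rule H_dom[OF a c0 k x r])
    then show ?thesis using h1 h2 n by simp
  qed
qed


lemma HR_le_HC:
  fixes \<alpha> c \<kappa> x \<rho> a :: real
  assumes a: "0 < \<alpha>" "\<alpha> < 1" and c0: "0 < c" and k: "0 < \<kappa>" and x: "0 < x" and r: "0 < \<rho>"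
    and False: "\<not> 1 \<le> x"
  shows "HR1 a \<alpha> c \<kappa> x \<rho> \<le> HC1 a \<alpha> c \<kappa> x" "HR2 a \<alpha> c \<kappa> x \<rho> \<le> HC2 a \<alpha> c \<kappa> x"
proof -
  have n: "0 \<le> HC1 a \<alpha> c \<kappa> x" "0 \<le> HC2 a \<alpha> c \<kappa> x"
    unfolding HC1_def HC2_def using c0 k by auto
  show "HR1 a \<alpha> c \<kappa> x \<rho> \<le> HC1 a \<alpha> c \<kappa> x"
  proof (cases "\<rho> \<le> x")
    case True
    have "\<rho> powr (1 + \<alpha>/2) \<le> 1" using True False r a by (intro powr_le1) auto
    then have "c * \<kappa> * x powr (a - \<alpha>/2) * \<rho> powr (1 + \<alpha>/2) \<le> c * \<kappa> * x powr (a - \<alpha>/2) * 1"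
      using c0 k by (intro mult_left_mono) auto
    then show ?thesis unfolding HR1_def HC1_def using True False r x by simp
  next
    case False
    then show ?thesis unfolding HR1_def using n by simp
  qed
  show "HR2 a \<alpha> c \<kappa> x \<rho> \<le> HC2 a \<alpha> c \<kappa> x"
  proof (cases "x \<le> \<rho>")
    case True
    have "exp (-(\<kappa> * x powr \<alpha>) * (\<rho> - x)) \<le> 1" using True k by simp
    then have "c * \<kappa> * x powr (a + 1) * exp (-(\<kappa> * x powr \<alpha>) * (\<rho> - x)) \<le> c * \<kappa> * x powr (a + 1) * 1"
      using c0 k by (intro mult_left_mono) auto
    then show ?thesis unfolding HR2_def HC2_def using True False r x by simp
  next
    case False
    then show ?thesis unfolding HR2_def using n by simp
  qed
qed

lemma col_dom_a':
  fixes \<alpha> c \<kappa> x \<rho> a :: real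
  assumes a: "0 < \<alpha>" "\<alpha> < 1" and c0: "0 < c" and k: "0 < \<kappa>" and x: "0 < x" and r: "0 < \<rho>"
    and ahi: "a \<le> 2*\<alpha>"
  shows "Kx a \<alpha> c \<kappa> x \<rho> \<le> Kx (2*\<alpha>) \<alpha> c \<kappa> x \<rho> + HC1 a \<alpha> c \<kappa> x + HC2 a \<alpha> c \<kappa> x"
proof -
  have n: "0 \<le> HC1 a \<alpha> c \<kappa> x" "0 \<le> HC2 a \<alpha> c \<kappa> x" "0 \<le> Kx (2*\<alpha>) \<alpha> c \<kappa> x \<rho>"
    unfolding HC1_def HC2_def using c0 k Kx_nonneg[of c \<kappa>] by auto
  show ?thesis
  proof (cases "1 \<le> x")
    case True
    have "Kx a \<alpha> c \<kappa> x \<rho> \<le> Kx (2*\<alpha>) \<alpha> c \<kappa> x \<rho>"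
      using Kx_mono_a[OF True ahi, of c \<kappa> \<alpha>] c0 k by auto
    then show ?thesis using n by simp
  next
    case False
    have "Kx a \<alpha> c \<kappa> x \<rho> \<le> HR1 a \<alpha> c \<kappa> x \<rho> + HR2 a \<alpha> c \<kappa> x \<rho>" by (rule H_dom[OF a c0 k x r])
    then show ?thesis using HR_le_HC[OF a c0 k x r False, of a] n by simp
  qed
qed

lemma col_int_a:
  fixes \<alpha> c \<kappa> \<rho> a :: real
  assumes a: "0 < \<alpha>" "\<alpha> < 1" and c: "c = \<kappa> * (1+\<alpha>)" and k: "0 < \<kappa>" and r: "0 < \<rho>"
    and alo: "-(1-\<alpha>)/2 < a" and ahi: "a \<le> 2*\<alpha>"
    and col2: "(\<integral>\<^sup>+x. ennreal (Kx (2*\<alpha>) \<alpha> c \<kappa> x \<rho>) * indicator {0<..} x \<partial>lborel) \<le> ennreal 9"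
  shows "(\<integral>\<^sup>+x. ennreal (Kx a \<alpha> c \<kappa> x \<rho>) * indicator {0<..} x \<partial>lborel)
     \<le> ennreal (9 + c*\<kappa>/(a - \<alpha>/2 + 1) + c*\<kappa>/(a + 1 + 1))"
proof -
  have c0: "0 < c" using c k a by simp
  have "(\<integral>\<^sup>+x. ennreal (Kx a \<alpha> c \<kappa> x \<rho>) * indicator {0<..} x \<partial>lborel)
     \<le> (\<integral>\<^sup>+x. ennreal (Kx (2*\<alpha>) \<alpha> c \<kappa> x \<rho>) * indicator {0<..} x + ennreal (HC1 a \<alpha> c \<kappa> x) + ennreal (HC2 a \<alpha> c \<kappa> x) \<partial>lborel)"
  proof (intro nn_integral_mono)
    fix x
    show "ennreal (Kx a \<alpha> c \<kappa> x \<rho>) * indicator {0<..} x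
      \<le> ennreal (Kx (2*\<alpha>) \<alpha> c \<kappa> x \<rho>) * indicator {0<..} x + ennreal (HC1 a \<alpha> c \<kappa> x) + ennreal (HC2 a \<alpha> c \<kappa> x)"
    proof (cases "0 < x")
      case True
      have n1: "0 \<le> HC1 a \<alpha> c \<kappa> x" "0 \<le> HC2 a \<alpha> c \<kappa> x" "0 \<le> Kx (2*\<alpha>) \<alpha> c \<kappa> x \<rho>"
        unfolding HC1_def HC2_def using c0 k Kx_nonneg[of c \<kappa>] by auto
      have "ennreal (Kx a \<alpha> c \<kappa> x \<rho>) \<le> ennreal (Kx (2*\<alpha>) \<alpha> c \<kappa> x \<rho> + HC1 a \<alpha> c \<kappa> x + HC2 a \<alpha> c \<kappa> x)"
        using col_dom_a'[OF a c0 k True r ahi] by (intro ennreal_leI)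
      then show ?thesis using True n1 by (simp add: ennreal_plus)
    qed simp
  qed
  also have "\<dots> = (\<integral>\<^sup>+x. ennreal (Kx (2*\<alpha>) \<alpha> c \<kappa> x \<rho>) * indicator {0<..} x \<partial>lborel)
      + (\<integral>\<^sup>+x. ennreal (HC1 a \<alpha> c \<kappa> x) \<partial>lborel) + (\<integral>\<^sup>+x. ennreal (HC2 a \<alpha> c \<kappa> x) \<partial>lborel)"
  proof -
    have m0: "(\<lambda>x. ennreal (Kx (2*\<alpha>) \<alpha> c \<kappa> x \<rho>) * indicator {0<..} x) \<in> borel_measurable lborel" by measurable
    have m1: "(\<lambda>x. ennreal (HC1 a \<alpha> c \<kappa> x)) \<in> borel_measurable lborel" unfolding HC1_def by measurable
    have m2: "(\<lambda>x. ennreal (HC2 a \<alpha> c \<kappa> x)) \<in> borel_measurable lborel" unfolding HC2_def by measurable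
    show ?thesis using m0 m1 m2 by (simp add: nn_integral_add borel_measurable_add)
  qed
  also have "\<dots> \<le> ennreal 9 + ennreal (c*\<kappa>/(a - \<alpha>/2 + 1)) + ennreal (c*\<kappa>/(a + 1 + 1))"
  proof (intro add_mono col2)
    show "(\<integral>\<^sup>+x. ennreal (HC1 a \<alpha> c \<kappa> x) \<partial>lborel) \<le> ennreal (c*\<kappa>/(a - \<alpha>/2 + 1))"
      unfolding HC1_def
      by (rule piece[OF _ _ _ eq_refl[OF N3[of "a - \<alpha>/2" 1]]]) (use c0 k alo a in auto)
    show "(\<integral>\<^sup>+x. ennreal (HC2 a \<alpha> c \<kappa> x) \<partial>lborel) \<le> ennreal (c*\<kappa>/(a + 1 + 1))"
      unfolding HC2_def
      by (rule piece[OF _ _ _ eq_refl[OF N3[of "a + 1" 1]]]) (use c0 k alo a in auto)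
  qed
  also have "\<dots> = ennreal (9 + c*\<kappa>/(a - \<alpha>/2 + 1) + c*\<kappa>/(a + 1 + 1))"
    using c0 k alo a by (intro enn3) auto
  finally show ?thesis .
qed


theorem lemma3p3:
  fixes \<alpha> :: real
  assumes "0 < \<alpha>" and "\<alpha> < 1"
  shows "(\<forall>k::int. k \<noteq> 0 \<longrightarrow>
            (\<forall>a::real. -(1 - \<alpha>)/2 < a \<and> a \<le> 2*\<alpha> \<longrightarrow> L2_bounded (Gker a \<alpha> k))
          \<and> L2_selfadjoint (Gker 0 \<alpha> k))
       \<and> (\<exists>C. \<forall>k::int. k \<noteq> 0 \<longrightarrow> L2_bounded_by C (Gker (2*\<alpha>) \<alpha> k))"
proof -
  have a: "0 < \<alpha>" "\<alpha> < 1" using assms by auto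
  have stp: "Gker b \<alpha> k = Kx b \<alpha> \<bar>real_of_int k\<bar> (\<bar>real_of_int k\<bar> / (1+\<alpha>))
      \<and> \<bar>real_of_int k\<bar> = (\<bar>real_of_int k\<bar> / (1+\<alpha>)) * (1+\<alpha>) \<and> 0 < \<bar>real_of_int k\<bar> / (1+\<alpha>)
      \<and> 0 < \<bar>real_of_int k\<bar>"
    if k: "k \<noteq> 0" for k b
    using Gker_Kx[OF a(1) k] k a by auto
  have bnd: "L2_bounded (Gker b \<alpha> k)" if k: "k \<noteq> 0" and b: "-(1 - \<alpha>)/2 < b" "b \<le> 2*\<alpha>" for k b
  proof -
    define c where "c = \<bar>real_of_int k\<bar>"
    define \<kappa> where "\<kappa> = c / (1+\<alpha>)"
    have G: "Gker b \<alpha> k = Kx b \<alpha> c \<kappa>" and c: "c = \<kappa> * (1+\<alpha>)" and kp: "0 < \<kappa>" and cp: "0 < c"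
      using stp[OF k, of b] unfolding c_def \<kappa>_def by auto
    define A where "A = 7 + c*\<kappa> + c"
    define B where "B = 9 + c*\<kappa>/(b - \<alpha>/2 + 1) + c*\<kappa>/(b + 1 + 1)"
    have A0: "0 \<le> A" unfolding A_def using cp kp by auto
    have B0: "0 \<le> B" unfolding B_def using cp kp b a by auto
    have "L2_bounded_by (sqrt (A*B)) (Kx b \<alpha> c \<kappa>)"
      unfolding L2_bounded_by_def
    proof (intro ballI)
      fix f assume f: "f \<in> L2pos"
      show "(AE x in lborel. 0 < x \<longrightarrow> set_integrable lborel {0<..} (\<lambda>\<rho>. complex_of_real (Kx b \<alpha> c \<kappa> x \<rho>) * f \<rho>))
          \<and> int_op (Kx b \<alpha> c \<kappa>) f \<in> L2pos \<and> L2norm (int_op (Kx b \<alpha> c \<kappa>) f) \<le> sqrt (A*B) * L2norm f"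
      proof (rule schur[OF Kx_meas _ A0 B0 _ _ f])
        show "0 \<le> Kx b \<alpha> c \<kappa> x y" for x y using Kx_nonneg[of c \<kappa>] cp kp by auto
        show "(\<integral>\<^sup>+y. ennreal (Kx b \<alpha> c \<kappa> x y) * indicator {0<..} y \<partial>lborel) \<le> ennreal A" if "0 < x" for x
          unfolding A_def by (rule row_int_a[OF a c kp that b row_int2[OF a c kp that]])
        show "(\<integral>\<^sup>+x. ennreal (Kx b \<alpha> c \<kappa> x y) * indicator {0<..} x \<partial>lborel) \<le> ennreal B" if "0 < y" for y
          unfolding B_def by (rule col_int_a[OF a c kp that b col_int2[OF a c kp that]])
      qed
    qed
    then show ?thesis unfolding L2_bounded_def G by blast
  qed
  have sa: "L2_selfadjoint (Gker 0 \<alpha> k)" if k: "k \<noteq> 0" for k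
  proof -
    define c where "c = \<bar>real_of_int k\<bar>"
    define \<kappa> where "\<kappa> = c / (1+\<alpha>)"
    have G: "Gker 0 \<alpha> k = Kx 0 \<alpha> c \<kappa>" and c: "c = \<kappa> * (1+\<alpha>)" and kp: "0 < \<kappa>" and cp: "0 < c"
      using stp[OF k, of 0] unfolding c_def \<kappa>_def by auto
    have b: "-(1 - \<alpha>)/2 < 0" "0 \<le> 2*\<alpha>" using a by auto
    define A where "A = 7 + c*\<kappa> + c"
    define B where "B = 9 + c*\<kappa>/(0 - \<alpha>/2 + 1) + c*\<kappa>/(0 + 1 + 1)"
    have A0: "0 \<le> A" unfolding A_def using cp kp by auto
    have B0: "0 \<le> B" unfolding B_def using cp kp b a by auto
    have "(LINT x:{0<..}|lborel. int_op (Kx 0 \<alpha> c \<kappa>) f x * cnj (g x))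
        = (LINT x:{0<..}|lborel. f x * cnj (int_op (Kx 0 \<alpha> c \<kappa>) g x))"
      if f: "f \<in> L2pos" and g: "g \<in> L2pos" for f g
    proof (rule schur_sa[OF Kx_meas _ Kx_sym A0 B0 _ _ f g])
      show "0 \<le> Kx 0 \<alpha> c \<kappa> x y" for x y using Kx_nonneg[of c \<kappa>] cp kp by auto
      show "(\<integral>\<^sup>+y. ennreal (Kx 0 \<alpha> c \<kappa> x y) * indicator {0<..} y \<partial>lborel) \<le> ennreal A" if "0 < x" for x
        unfolding A_def by (rule row_int_a[OF a c kp that b row_int2[OF a c kp that]])
      show "(\<integral>\<^sup>+x. ennreal (Kx 0 \<alpha> c \<kappa> x y) * indicator {0<..} x \<partial>lborel) \<le> ennreal B" if "0 < y" for y
        unfolding B_def by (rule col_int_a[OF a c kp that b col_int2[OF a c kp that]])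
    qed
    moreover have "L2_bounded (Gker 0 \<alpha> k)" using bnd[OF k b] .
    ultimately show ?thesis unfolding L2_selfadjoint_def G by blast
  qed
  have unif: "L2_bounded_by (sqrt (7*9)) (Gker (2*\<alpha>) \<alpha> k)" if k: "k \<noteq> 0" for k
  proof -
    define c where "c = \<bar>real_of_int k\<bar>"
    define \<kappa> where "\<kappa> = c / (1+\<alpha>)"
    have G: "Gker (2*\<alpha>) \<alpha> k = Kx (2*\<alpha>) \<alpha> c \<kappa>" and c: "c = \<kappa> * (1+\<alpha>)" and kp: "0 < \<kappa>" and cp: "0 < c"
      using stp[OF k, of "2*\<alpha>"] unfolding c_def \<kappa>_def by auto
    show ?thesis
      unfolding L2_bounded_by_def G
    proof (intro ballI)
      fix f assume f: "f \<in> L2pos"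
      show "(AE x in lborel. 0 < x \<longrightarrow> set_integrable lborel {0<..} (\<lambda>\<rho>. complex_of_real (Kx (2*\<alpha>) \<alpha> c \<kappa> x \<rho>) * f \<rho>))
          \<and> int_op (Kx (2*\<alpha>) \<alpha> c \<kappa>) f \<in> L2pos \<and> L2norm (int_op (Kx (2*\<alpha>) \<alpha> c \<kappa>) f) \<le> sqrt (7*9) * L2norm f"
      proof (rule schur[OF Kx_meas _ _ _ _ _ f])
        show "0 \<le> Kx (2*\<alpha>) \<alpha> c \<kappa> x y" for x y using Kx_nonneg[of c \<kappa>] cp kp by auto
        show "(\<integral>\<^sup>+y. ennreal (Kx (2*\<alpha>) \<alpha> c \<kappa> x y) * indicator {0<..} y \<partial>lborel) \<le> ennreal 7" if "0 < x" for x
          by (rule row_int2[OF a c kp that])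
        show "(\<integral>\<^sup>+x. ennreal (Kx (2*\<alpha>) \<alpha> c \<kappa> x y) * indicator {0<..} x \<partial>lborel) \<le> ennreal 9" if "0 < y" for y
          by (rule col_int2[OF a c kp that])
      qed auto
    qed
  qed
  show ?thesis using bnd sa unif by blast
qed


end
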